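(* Let $m$ be a positive integer. For $r\ge 0$ let $f_r=[\psi_1,\psi_1^*]\cdots[\psi_r,\psi_r^*]\in\mathrm{Cl}_q(nm,k)$ (so $f_0=1$), where $[A,B]=AB-BA$. Let $\phi_a$ denote either $\psi_a$ or $\psi_a^*$. There is a map $\Gamma_q\colon \mathrm{Cl}_q(n,k)^{\otimes m}\to \mathrm{Cl}_q(nm,k)$ (ordinary tensor product of algebras over $\mathbb{k}$) determined by \[ 1\otimes\cdots\otimes\phi_a\otimes\cdots\otimes 1\mapsto f_{(j-1)n}\,\phi_{a+(j-1)n},\qquad 1\otimes\cdots\otimes\omega_a\otimes\cdots\otimes1\mapsto \omega_{a+(j-1)n}, \] where on the left $\phi_a$, resp. $\omega_a$, sits in the $j$th tensor factor ($1\le j\le m$, $1\le a\le n$), and it is an isomorphism of $\mathbb{Z}^{nm}$-graded algebras. Its inverse $\Gamma_q^{-1}\colon \mathrm{Cl}_q(nm,k)\to\mathrm{Cl}_q(n,k)^{\otimes m}$ is given by \[ \phi_{a+(j-1)n}\mapsto f_n\otimes\cdots\otimes f_n\otimes\phi_a\otimes1\otimes\cdots\otimes1,\qquad \omega_{a+(j-1)n}\mapsto 1\otimes\cdots\otimes\omega_a\otimes\cdots\otimes 1, \] where $\phi_a$, resp. $\omega_a$, is in the $j$th factor (and $f_n\in\mathrm{Cl}_q(n,k)$ occupies the first $j-1$ factors). In particular, $\Gamma_q(1\otimes\cdots\otimes\phi_a\phi_b\otimes\cdots\otimes1)=\phi_{a+(j-1)n}\phi_{b+(j-1)n}$ when $\phi_a\phi_b$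 is in the $j$th factor.
   Context: Let $\mathbb{k}$ be a field of characteristic different from $2$, let $q\in\mathbb{k}^\times$, and let $N,k$ be positive integers. The quantum Clifford algebra $\mathrm{Cl}_q(N,k)$ is the unital associative $\mathbb{k}$-algebra generated by $\psi_a,\psi_a^*,\omega_a,\omega_a^{-1}$ for $a\in\{1,\dots,N\}$, subject to the relations (for all $a,b\in\{1,\dots,N\}$): $\omega_a\omega_b=\omega_b\omega_a$; $\omega_a\omega_a^{-1}=1$; $\omega_a\psi_b=q^{\delta_{ab}}\psi_b\omega_a$; $\omega_a\psi_b^*=q^{-\delta_{ab}}\psi_b^*\omega_a$; $\psi_a\psi_b+\psi_b\psi_a=0$; $\psi_a^*\psi_b^*+\psi_b^*\psi_a^*=0$; $\psi_a\psi_a^*+q^k\psi_a^*\psi_a=\omega_a^{-k}$; $\psi_a\psi_a^*+q^{-k}\psi_a^*\psi_a=\omega_a^{k}$; and $\psi_a\psi_b^*+\psi_b^*\psi_a=0$ if $a\neq b$. It carries a $\mathbb{Z}^N$-grading with $\deg\psi_a=e_a$, $\deg\psi_a^*=-e_a$, $\deg\omega_a=0$ ($e_a$ the standard basis vector). The theorem uses $N=n$ and $N=nm$; $\mathrm{Cl}_q(n,k)^{\otimes m}$ is $\mathbb{Z}^{nm}$-graded by letting the $j$th factor's degree $e_a$ correspond to $e_{a+(j-1)n}$. *)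

theory Defs
  imports "HOL-Library.Poly_Mapping" "HOL-Algebra.QuotRing"
begin

datatype 'g word = Wd "'g list"

fun letters :: "'g word \<Rightarrow> 'g list" where "letters (Wd xs) = xs"

instantiation word :: (type) monoid_add
begin
definition zero_word_def: "0 = Wd []"
definition plus_word_def: "u + v = Wd (letters u @ letters v)"
instance
proof
  fix a b c :: "'a word"
  show "a + b + c = a + (b + c)" by (simp add: plus_word_def)
  show "0 + a = a" by (cases a) (simp add: plus_word_def zero_word_def)
  show "a + 0 = a" by (cases a) (simp add: plus_word_def zero_word_def)
qed
end

text \<open>Elements: finitely supported k-linear combinations of words, multiplication by
  concatenation of words (the monoid algebra of the free monoid).\<close>

type_synonym ('g,'k) fa = "'g word \<Rightarrow>\<^sub>0 'k"

definition FreeAlg :: "'g set \<Rightarrow> ('g,'k::field) fa ring" where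
  "FreeAlg G = \<lparr>carrier = {p. \<forall>w\<in>Poly_Mapping.keys p. set (letters w) \<subseteq> G},
                mult = (*), one = 1, zero = 0, add = (+)\<rparr>"

definition gen :: "'g \<Rightarrow> ('g,'k::field) fa" where
  "gen g = Poly_Mapping.single (Wd [g]) 1"

definition scal :: "'k::field \<Rightarrow> ('g,'k) fa" where
  "scal c = Poly_Mapping.single (Wd []) c"

definition free_hom :: "('g \<Rightarrow> ('h,'k::field) fa) \<Rightarrow> ('g,'k) fa \<Rightarrow> ('h,'k) fa" where
  "free_hom h p = (\<Sum>w\<in>Poly_Mapping.keys p. scal (Poly_Mapping.lookup p w) * prod_list (map h (letters w)))"

definition Presented :: "'g set \<Rightarrow> ('g,'k::field) fa set \<Rightarrow> ('g,'k) fa set ring" where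
  "Presented G Rs = FreeAlg G Quot genideal (FreeAlg G) Rs"

definition cls :: "'g set \<Rightarrow> ('g,'k::field) fa set \<Rightarrow> ('g,'k) fa \<Rightarrow> ('g,'k) fa set" where
  "cls G Rs p = genideal (FreeAlg G) Rs +>\<^bsub>FreeAlg G\<^esub> p"

datatype cgen = Psi nat | PsiS nat | Om nat | OmI nat

definition cgens :: "nat \<Rightarrow> cgen set" where
  "cgens N = (\<Union>a\<in>{1..N}. {Psi a, PsiS a, Om a, OmI a})"

definition cl_rels :: "'k::field \<Rightarrow> nat \<Rightarrow> nat \<Rightarrow> (cgen,'k) fa set" where
  "cl_rels q N k = (\<Union>a\<in>{1..N}. \<Union>b\<in>{1..N}.
     { gen (Om a) * gen (Om b) - gen (Om b) * gen (Om a),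
       gen (Om a) * gen (OmI a) - 1,
       gen (OmI a) * gen (Om a) - 1,
       gen (Om a) * gen (Psi b) - scal (if a = b then q else 1) * gen (Psi b) * gen (Om a),
       gen (Om a) * gen (PsiS b) - scal (if a = b then inverse q else 1) * gen (PsiS b) * gen (Om a),
       gen (Psi a) * gen (Psi b) + gen (Psi b) * gen (Psi a),
       gen (PsiS a) * gen (PsiS b) + gen (PsiS b) * gen (PsiS a),
       gen (Psi a) * gen (PsiS a) + scal (q ^ k) * gen (PsiS a) * gen (Psi a) - gen (OmI a) ^ k,
       gen (Psi a) * gen (PsiS a) + scal (inverse q ^ k) * gen (PsiS a) * gen (Psi a) - gen (Om a) ^ k }
     \<union> (if a \<noteq> b then {gen (Psi a) * gen (PsiS b) + gen (PsiS b) * gen (Psi a)} else {}))"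

definition Cl :: "'k::field \<Rightarrow> nat \<Rightarrow> nat \<Rightarrow> (cgen,'k) fa set ring" where
  "Cl q N k = Presented (cgens N) (cl_rels q N k)"

definition clcls :: "'k::field \<Rightarrow> nat \<Rightarrow> nat \<Rightarrow> (cgen,'k) fa \<Rightarrow> (cgen,'k) fa set" where
  "clcls q N k = cls (cgens N) (cl_rels q N k)"

text \<open>Presented by the generators (j,g) of the j-th factor (1 \<le> j \<le> m), the relations of
  each factor, and the relations that elements of distinct factors commute.\<close>

definition tgens :: "nat \<Rightarrow> nat \<Rightarrow> (nat \<times> cgen) set" where
  "tgens n m = {(j,g). j \<in> {1..m} \<and> g \<in> cgens n}"

definition t_rels :: "'k::field \<Rightarrow> nat \<Rightarrow> nat \<Rightarrow> nat \<Rightarrow> (nat \<times> cgen,'k) fa set" where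
  "t_rels q n m k =
     (\<Union>j\<in>{1..m}. free_hom (\<lambda>g. gen (j,g)) ` cl_rels q n k)
   \<union> {gen (j,g) * gen (j',g') - gen (j',g') * gen (j,g) | j j' g g'.
        j \<in> {1..m} \<and> j' \<in> {1..m} \<and> j \<noteq> j' \<and> g \<in> cgens n \<and> g' \<in> cgens n}"

definition Tens :: "'k::field \<Rightarrow> nat \<Rightarrow> nat \<Rightarrow> nat \<Rightarrow> (nat \<times> cgen,'k) fa set ring" where
  "Tens q n m k = Presented (tgens n m) (t_rels q n m k)"

definition tcls :: "'k::field \<Rightarrow> nat \<Rightarrow> nat \<Rightarrow> nat \<Rightarrow> (nat \<times> cgen,'k) fa \<Rightarrow> (nat \<times> cgen,'k) fa set" where
  "tcls q n m k = cls (tgens n m) (t_rels q n m k)"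

text \<open>The element 1 \<otimes> .. \<otimes> x \<otimes> .. \<otimes> 1 with x in the j-th factor (on representatives).\<close>
definition in_factor :: "nat \<Rightarrow> (cgen,'k::field) fa \<Rightarrow> (nat \<times> cgen,'k) fa" where
  "in_factor j x = free_hom (\<lambda>g. gen (j,g)) x"

fun shift :: "nat \<Rightarrow> cgen \<Rightarrow> cgen" where
  "shift s (Psi a) = Psi (a + s)" | "shift s (PsiS a) = PsiS (a + s)"
| "shift s (Om a) = Om (a + s)" | "shift s (OmI a) = OmI (a + s)"

fun cdeg :: "cgen \<Rightarrow> nat \<Rightarrow> int" where
  "cdeg (Psi a) = (\<lambda>i. if i = a then 1 else 0)"
| "cdeg (PsiS a) = (\<lambda>i. if i = a then -1 else 0)"
| "cdeg (Om a) = (\<lambda>i. 0)" | "cdeg (OmI a) = (\<lambda>i. 0)"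

definition tdeg :: "nat \<Rightarrow> nat \<times> cgen \<Rightarrow> nat \<Rightarrow> int" where
  "tdeg n jg = cdeg (shift ((fst jg - 1) * n) (snd jg))"

definition wdeg :: "('g \<Rightarrow> nat \<Rightarrow> int) \<Rightarrow> 'g word \<Rightarrow> nat \<Rightarrow> int" where
  "wdeg dg w = (\<lambda>i. sum_list (map (\<lambda>g. dg g i) (letters w)))"

definition homog :: "('g \<Rightarrow> nat \<Rightarrow> int) \<Rightarrow> (nat \<Rightarrow> int) \<Rightarrow> ('g,'k::field) fa \<Rightarrow> bool" where
  "homog dg d p \<longleftrightarrow> (\<forall>w\<in>Poly_Mapping.keys p. wdeg dg w = d)"

definition graded_map ::
  "'g set \<Rightarrow> ('g,'k::field) fa set \<Rightarrow> ('g \<Rightarrow> nat \<Rightarrow> int) \<Rightarrow>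
   'h set \<Rightarrow> ('h,'k) fa set \<Rightarrow> ('h \<Rightarrow> nat \<Rightarrow> int) \<Rightarrow>
   (('g,'k) fa set \<Rightarrow> ('h,'k) fa set) \<Rightarrow> bool" where
  "graded_map G1 R1 d1 G2 R2 d2 F \<longleftrightarrow>
     (\<forall>d p. p \<in> carrier (FreeAlg G1) \<and> homog d1 d p \<longrightarrow>
        (\<exists>p'. p' \<in> carrier (FreeAlg G2) \<and> homog d2 d p' \<and> F (cls G1 R1 p) = cls G2 R2 p'))"

definition fr :: "nat \<Rightarrow> (cgen,'k::field) fa" where
  "fr r = prod_list (map (\<lambda>i. gen (Psi i) * gen (PsiS i) - gen (PsiS i) * gen (Psi i)) [1..<r+1])"

end

theory Submission
  imports Defs
begin

lemma letters_plus[simp]: "letters (u + v) = letters u @ letters v"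
  by (simp add: plus_word_def)
lemma letters_zero[simp]: "letters 0 = []"
  by (simp add: zero_word_def)
lemma Wd_letters[simp]: "Wd (letters w) = w"
  by (cases w) simp
lemma Wd_nil: "Wd [] = 0"
  by (simp add: zero_word_def)
lemma Wd_Cons: "Wd (x # xs) = Wd [x] + Wd xs"
  by (simp add: plus_word_def)

lemma scal_0[simp]: "scal 0 = 0" by (simp add: scal_def)
lemma scal_1[simp]: "scal 1 = 1" by (simp add: scal_def Wd_nil)
lemma scal_add: "scal (a+b) = scal a + scal b" by (simp add: scal_def single_add)
lemma scal_mult: "scal (a*b) = scal a * scal b" by (simp add: scal_def mult_single Wd_nil)
lemma scal_uminus: "scal (-a) = - scal a" by (simp add: scal_def single_uminus)
lemma scal_diff: "scal (a-b) = scal a - scal b" by (simp add: scal_def single_diff)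
lemma scal_power: "scal (a^n) = scal a ^ n"
  by (induction n) (simp_all add: scal_mult)

lemma pm_expansion: "p = (\<Sum>w\<in>Poly_Mapping.keys p. Poly_Mapping.single w (Poly_Mapping.lookup p w))"
proof -
  have *: "finite I \<Longrightarrow> Poly_Mapping.lookup (\<Sum>w\<in>I. Poly_Mapping.single w (Poly_Mapping.lookup p w)) j =
            (if j \<in> I then Poly_Mapping.lookup p j else 0)" for I j
    by (induction I rule: finite_induct) (auto simp: lookup_single lookup_add when_def)
  show ?thesis
    by (rule poly_mapping_eqI) (fastforce simp add: in_keys_iff *)
qed

lemma prod_gen: "prod_list (map gen xs) = (Poly_Mapping.single (Wd xs) 1 :: ('g,'k::field) fa)"
proof (induction xs)
  case Nil then show ?case by (simp add: Wd_nil)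
next
  case (Cons x xs)
  then show ?case by (simp add: gen_def mult_single Wd_Cons[of x xs])
qed

lemma single_scal_gen: "(Poly_Mapping.single w c :: ('g,'k::field) fa) = scal c * prod_list (map gen (letters w))"
  by (simp add: prod_gen scal_def mult_single Wd_nil)

lemma scal_central: "scal c * (x :: ('g,'k::field) fa) = x * scal c"
proof -
  have "scal c * x = (\<Sum>w\<in>Poly_Mapping.keys x. scal c * Poly_Mapping.single w (Poly_Mapping.lookup x w))"
    by (subst pm_expansion[of x]) (simp add: sum_distrib_left)
  also have "\<dots> = (\<Sum>w\<in>Poly_Mapping.keys x. Poly_Mapping.single w (Poly_Mapping.lookup x w) * scal c)"
    by (rule sum.cong) (simp_all add: scal_def mult_single mult.commute Wd_nil)
  also have "\<dots> = x * scal c"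
    by (subst (3) pm_expansion[of x]) (simp add: sum_distrib_right)
  finally show ?thesis .
qed

lemma scal_mult_split: "scal (a*b) * ((X::('g,'k::field) fa) * Y) = (scal a * X) * (scal b * Y)"
proof -
  have "scal (a*b) * (X * Y) = scal a * ((scal b * X) * Y)" by (simp add: scal_mult mult.assoc)
  also have "\<dots> = scal a * ((X * scal b) * Y)" by (simp add: scal_central)
  finally show ?thesis by (simp add: mult.assoc)
qed

section \<open>The free homomorphism\<close>

abbreviation Hw :: "('g \<Rightarrow> ('h,'k::field) fa) \<Rightarrow> 'g word \<Rightarrow> ('h,'k) fa" where
  "Hw h w \<equiv> prod_list (map h (letters w))"

lemma free_hom_superset:
  assumes "finite S" "Poly_Mapping.keys p \<subseteq> S"
  shows "free_hom h p = (\<Sum>w\<in>S. scal (Poly_Mapping.lookup p w) * Hw h w)"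
  unfolding free_hom_def
  by (rule sum.mono_neutral_left) (use assms in \<open>auto simp: in_keys_iff\<close>)

lemma free_hom_zero[simp]: "free_hom h 0 = 0"
  by (simp add: free_hom_def)

lemma free_hom_add: "free_hom h (p + q) = free_hom h p + free_hom h q"
proof -
  let ?S = "Poly_Mapping.keys p \<union> Poly_Mapping.keys q"
  have "free_hom h (p+q) = (\<Sum>w\<in>?S. scal (Poly_Mapping.lookup (p+q) w) * Hw h w)"
    by (rule free_hom_superset) (use keys_add[of p q] in auto)
  also have "\<dots> = (\<Sum>w\<in>?S. scal (Poly_Mapping.lookup p w) * Hw h w) + (\<Sum>w\<in>?S. scal (Poly_Mapping.lookup q w) * Hw h w)"
    by (simp add: lookup_add scal_add distrib_right sum.distrib)
  also have "\<dots> = free_hom h p + free_hom h q"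
    by (simp add: free_hom_superset[symmetric])
  finally show ?thesis .
qed

lemma free_hom_single: "free_hom h (Poly_Mapping.single w c) = scal c * Hw h w"
  by (cases "c = 0") (simp_all add: free_hom_def)

lemma free_hom_sum: "free_hom h (sum f A) = (\<Sum>a\<in>A. free_hom h (f a))"
  by (induction A rule: infinite_finite_induct) (simp_all add: free_hom_add)

lemma free_hom_uminus: "free_hom h (- p) = - free_hom h p"
proof -
  have "free_hom h (- p) + free_hom h p = 0" by (simp add: free_hom_add[symmetric])
  then show ?thesis by (simp add: eq_neg_iff_add_eq_0)
qed

lemma free_hom_diff: "free_hom h (p - q) = free_hom h p - free_hom h q"
  by (simp only: diff_conv_add_uminus free_hom_add free_hom_uminus)

lemma free_hom_expansion: "free_hom h p = (\<Sum>w\<in>Poly_Mapping.keys p. free_hom h (Poly_Mapping.single w (Poly_Mapping.lookup p w)))"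
proof -
  have "free_hom h p = free_hom h (\<Sum>w\<in>Poly_Mapping.keys p. Poly_Mapping.single w (Poly_Mapping.lookup p w))"
    by (rule arg_cong[OF pm_expansion[of p]])
  then show ?thesis by (simp only: free_hom_sum)
qed

lemma free_hom_mult: "free_hom h (p * q) = free_hom h p * free_hom h q"
proof -
  have "p * q = (\<Sum>v\<in>Poly_Mapping.keys q. \<Sum>u\<in>Poly_Mapping.keys p.
            Poly_Mapping.single u (Poly_Mapping.lookup p u) * Poly_Mapping.single v (Poly_Mapping.lookup q v))"
  proof -
    have "p * q = (\<Sum>u\<in>Poly_Mapping.keys p. Poly_Mapping.single u (Poly_Mapping.lookup p u)) *
                  (\<Sum>v\<in>Poly_Mapping.keys q. Poly_Mapping.single v (Poly_Mapping.lookup q v))"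
      by (rule arg_cong2[where f="(*)"]; rule pm_expansion)
    then show ?thesis by (simp only: sum_distrib_left sum_distrib_right)
  qed
  then have "free_hom h (p * q) = (\<Sum>v\<in>Poly_Mapping.keys q. \<Sum>u\<in>Poly_Mapping.keys p.
       (scal (Poly_Mapping.lookup p u) * Hw h u) * (scal (Poly_Mapping.lookup q v) * Hw h v))"
    by (simp add: free_hom_sum mult_single free_hom_single scal_mult_split)
  also have "\<dots> = free_hom h p * free_hom h q"
    by (simp add: free_hom_def sum_distrib_left sum_distrib_right)
  finally show ?thesis .
qed

lemma free_hom_scal[simp]: "free_hom h (scal c) = scal c"
  unfolding scal_def free_hom_single by simp

lemma free_hom_one[simp]: "free_hom h 1 = 1"
  using free_hom_scal[of h 1] by simp

lemma free_hom_gen[simp]: "free_hom h (gen g) = h g"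
  by (simp add: gen_def free_hom_single)

lemma free_hom_power: "free_hom h (p ^ n) = free_hom h p ^ n"
  by (induction n) (simp_all add: free_hom_mult)

lemma free_hom_prod_list: "free_hom h (prod_list xs) = prod_list (map (free_hom h) xs)"
  by (induction xs) (simp_all add: free_hom_mult)

lemma free_hom_Hw: "free_hom g (Hw h w) = Hw (\<lambda>x. free_hom g (h x)) w"
  by (simp add: free_hom_prod_list comp_def)

lemma free_hom_comp: "free_hom g (free_hom h p) = free_hom (\<lambda>x. free_hom g (h x)) p"
  unfolding free_hom_def[of h p] free_hom_def[of "\<lambda>x. free_hom g (h x)" p]
  by (simp only: free_hom_sum free_hom_mult free_hom_scal free_hom_Hw)

lemma free_hom_gen_id: "free_hom gen p = p"
  unfolding free_hom_def by (simp only: single_scal_gen[symmetric] pm_expansion[symmetric])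

lemma free_hom_cong:
  assumes "\<And>w g. w \<in> Poly_Mapping.keys p \<Longrightarrow> g \<in> set (letters w) \<Longrightarrow> h g = h' g"
  shows "free_hom h p = free_hom h' p"
  unfolding free_hom_def
proof (rule sum.cong[OF refl])
  fix w assume "w \<in> Poly_Mapping.keys p"
  then have "map h (letters w) = map h' (letters w)" using assms by (intro map_cong) auto
  then show "scal (Poly_Mapping.lookup p w) * Hw h w = scal (Poly_Mapping.lookup p w) * Hw h' w" by (simp del: map_eq_conv)
qed

abbreviation FC :: "'g set \<Rightarrow> ('g,'k::field) fa set" where
  "FC G \<equiv> carrier (FreeAlg G)"

lemma FC_iff: "p \<in> FC G \<longleftrightarrow> (\<forall>w\<in>Poly_Mapping.keys p. set (letters w) \<subseteq> G)"
  by (simp add: FreeAlg_def)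

lemma FreeAlg_simps[simp]: "mult (FreeAlg G) = (*)" "add (FreeAlg G) = (+)"
  "one (FreeAlg G) = 1" "zero (FreeAlg G) = 0"
  by (simp_all add: FreeAlg_def)

lemma FC_add[intro]: "p \<in> FC G \<Longrightarrow> q \<in> FC G \<Longrightarrow> p + q \<in> FC G"
  using keys_add[of p q] unfolding FC_iff by blast

lemma FC_uminus[intro]: "p \<in> FC G \<Longrightarrow> - p \<in> FC G"
  unfolding FC_iff by simp

lemma FC_diff[intro]: "p \<in> FC G \<Longrightarrow> q \<in> FC G \<Longrightarrow> p - q \<in> FC G"
  using keys_diff[of p q] unfolding FC_iff by blast

lemma FC_zero[intro,simp]: "0 \<in> FC G"
  unfolding FC_iff by simp

lemma FC_one[intro,simp]: "1 \<in> FC G"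
  unfolding FC_iff by simp

lemma FC_scal[intro,simp]: "scal c \<in> FC G"
  unfolding FC_iff scal_def by (simp add: Wd_nil)

lemma FC_gen[intro]: "g \<in> G \<Longrightarrow> gen g \<in> FC G"
  unfolding FC_iff gen_def by simp

lemma FC_mult[intro]: "p \<in> FC G \<Longrightarrow> q \<in> FC G \<Longrightarrow> p * q \<in> FC G"
  using keys_mult[of p q] unfolding FC_iff by fastforce

lemma FC_power[intro]: "p \<in> FC G \<Longrightarrow> p ^ n \<in> FC G"
  by (induction n) auto

lemma FC_prod_list[intro]: "(\<And>x. x \<in> set xs \<Longrightarrow> x \<in> FC G) \<Longrightarrow> prod_list xs \<in> FC G"
  by (induction xs) auto

lemma FC_sum[intro]: "(\<And>x. x \<in> A \<Longrightarrow> f x \<in> FC G) \<Longrightarrow> sum f A \<in> FC G"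
  by (induction A rule: infinite_finite_induct) auto

lemma FC_free_hom[intro]:
  assumes "\<And>g. g \<in> G \<Longrightarrow> h g \<in> FC H" "p \<in> FC G"
  shows "free_hom h p \<in> FC H"
  unfolding free_hom_def
proof (rule FC_sum, rule FC_mult[OF FC_scal], rule FC_prod_list)
  fix w x assume w: "w \<in> Poly_Mapping.keys p" and x: "x \<in> set (map h (letters w))"
  then show "x \<in> FC H" using assms FC_iff by fastforce
qed

lemma FC_free_hom_all[intro]:
  assumes "\<And>g. h g \<in> FC H"
  shows "free_hom h p \<in> FC H"
  unfolding free_hom_def
  by (rule FC_sum, rule FC_mult[OF FC_scal], rule FC_prod_list) (use assms in auto)

lemma FC_induct[consumes 1, case_names scal gen add mult]:
  fixes p :: "('g,'k::field) fa"
  assumes p: "p \<in> FC G"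
    and sc: "\<And>c. P (scal c)" and gn: "\<And>g. g \<in> G \<Longrightarrow> P (gen g)"
    and ad: "\<And>x y. x \<in> FC G \<Longrightarrow> y \<in> FC G \<Longrightarrow> P x \<Longrightarrow> P y \<Longrightarrow> P (x + y)"
    and mu: "\<And>x y. x \<in> FC G \<Longrightarrow> y \<in> FC G \<Longrightarrow> P x \<Longrightarrow> P y \<Longrightarrow> P (x * y)"
  shows "P p"
proof -
  have prodP: "set xs \<subseteq> G \<Longrightarrow> P (prod_list (map gen xs)) \<and> (prod_list (map gen xs) :: ('g,'k) fa) \<in> FC G" for xs
  proof (induction xs)
    case Nil then show ?case using sc[of 1] by simp
  next
    case (Cons x xs)
    from Cons.prems have xs: "set xs \<subseteq> G" and x: "x \<in> G" by auto
    from Cons.IH[OF xs] have ih: "P (prod_list (map gen xs))" "(prod_list (map gen xs) :: ('g,'k) fa) \<in> FC G" by auto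
    have "P (gen x * prod_list (map gen xs))" by (rule mu[OF FC_gen[OF x] ih(2) gn[OF x] ih(1)])
    then show ?case using FC_mult[OF FC_gen[OF x] ih(2)] by simp
  qed
  have "S \<subseteq> Poly_Mapping.keys p \<Longrightarrow>
     P (\<Sum>w\<in>S. Poly_Mapping.single w (Poly_Mapping.lookup p w)) \<and>
     (\<Sum>w\<in>S. Poly_Mapping.single w (Poly_Mapping.lookup p w) :: ('g,'k) fa) \<in> FC G" for S
  proof (induction S rule: infinite_finite_induct)
    case (infinite A)
    then show ?case using finite_subset[OF _ finite_keys] by blast
  next
    case empty
    then show ?case using sc[of 0] by simp
  next
    case (insert w F)
    have wG: "set (letters w) \<subseteq> G" using insert.prems p FC_iff by blast
    have s: "Poly_Mapping.single w (Poly_Mapping.lookup p w) = scal (Poly_Mapping.lookup p w) * prod_list (map gen (letters w))"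
      by (rule single_scal_gen)
    have 1: "P (Poly_Mapping.single w (Poly_Mapping.lookup p w))"
      unfolding s using prodP[OF wG] sc mu by blast
    have 2: "Poly_Mapping.single w (Poly_Mapping.lookup p w) \<in> FC G"
      unfolding s using prodP[OF wG] by blast
    show ?case using insert 1 2 ad by auto
  qed
  from this[OF order_refl] show ?thesis using pm_expansion[of p] by simp
qed

lemma FreeAlg_ring: "ring (FreeAlg G)"
proof (rule ringI)
  show "abelian_group (FreeAlg G)"
    by (rule abelian_groupI) (auto simp: add.commute add.assoc intro!: bexI[of _ "- _"])
  show "monoid (FreeAlg G)"
    by (rule monoidI) (auto simp: mult.assoc)
qed (auto simp: distrib_left distrib_right)

lemma FreeAlg_a_inv: "x \<in> FC G \<Longrightarrow> a_inv (FreeAlg G) x = - x"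
proof -
  interpret ring "FreeAlg G" by (rule FreeAlg_ring)
  assume x: "x \<in> FC G"
  show ?thesis by (rule minus_equality) (use x in auto)
qed

lemma FreeAlg_a_minus: "x \<in> FC G \<Longrightarrow> y \<in> FC G \<Longrightarrow> a_minus (FreeAlg G) x y = x - y"
  by (simp add: a_minus_def FreeAlg_a_inv)

section \<open>Two-sided ideal of the whole type generated by relations\<close>

inductive_set Jd :: "('g,'k::field) fa set \<Rightarrow> ('g,'k) fa set" for Rs where
  Jd_rel: "r \<in> Rs \<Longrightarrow> r \<in> Jd Rs"
| Jd_zero[simp,intro]: "0 \<in> Jd Rs"
| Jd_add: "x \<in> Jd Rs \<Longrightarrow> y \<in> Jd Rs \<Longrightarrow> x + y \<in> Jd Rs"
| Jd_mult: "x \<in> Jd Rs \<Longrightarrow> a * x * b \<in> Jd Rs"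

lemma Jd_lmult: "x \<in> Jd Rs \<Longrightarrow> a * x \<in> Jd Rs"
  using Jd_mult[of x Rs a 1] by simp
lemma Jd_rmult: "x \<in> Jd Rs \<Longrightarrow> x * b \<in> Jd Rs"
  using Jd_mult[of x Rs 1 b] by simp
lemma Jd_uminus: "x \<in> Jd Rs \<Longrightarrow> - x \<in> Jd Rs"
  using Jd_lmult[of x Rs "-1"] by simp
lemma Jd_diff: "x \<in> Jd Rs \<Longrightarrow> y \<in> Jd Rs \<Longrightarrow> x - y \<in> Jd Rs"
proof -
  assume "x \<in> Jd Rs" "y \<in> Jd Rs"
  then have "x + - y \<in> Jd Rs" by (intro Jd_add Jd_uminus)
  then show ?thesis by (simp only: diff_conv_add_uminus)
qed

lemma Jd_free_hom:
  assumes "\<And>r. r \<in> R1 \<Longrightarrow> free_hom h r \<in> Jd R2" "x \<in> Jd R1"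
  shows "free_hom h x \<in> Jd R2"
  using assms(2)
  by induction (auto simp: assms(1) free_hom_add free_hom_mult intro: Jd_add Jd_mult)

lemma genideal_Jd:
  fixes Rs :: "('g,'k::field) fa set" and G :: "'g set"
  assumes Rs: "Rs \<subseteq> FC G" and p: "p \<in> FC G"
  shows "p \<in> genideal (FreeAlg G) Rs \<longleftrightarrow> p \<in> Jd Rs"
proof -
  interpret R: ring "FreeAlg G" by (rule FreeAlg_ring)
  let ?I = "genideal (FreeAlg G) Rs"
  have I: "ideal ?I (FreeAlg G)" by (rule R.genideal_ideal[OF Rs])
  define \<pi> :: "('g,'k) fa \<Rightarrow> ('g,'k) fa" where "\<pi> = free_hom (\<lambda>g. if g \<in> G then gen g else 0)"
  have \<pi>C: "\<pi> x \<in> FC G" for x unfolding \<pi>_def by (rule FC_free_hom_all) auto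
  have \<pi>id: "x \<in> FC G \<Longrightarrow> \<pi> x = x" for x
  proof -
    assume x: "x \<in> FC G"
    have "\<pi> x = free_hom gen x" unfolding \<pi>_def
      by (rule free_hom_cong) (use x in \<open>auto simp: FC_iff\<close>)
    then show ?thesis by (simp add: free_hom_gen_id)
  qed
  have 1: "x \<in> Jd Rs \<Longrightarrow> \<pi> x \<in> ?I" for x
  proof (induction rule: Jd.induct)
    case (Jd_rel r)
    then have "r \<in> FC G" "r \<in> ?I" using Rs R.genideal_self[OF Rs] by blast+
    then show ?case using \<pi>id by simp
  next
    case Jd_zero
    then show ?case using additive_subgroup.zero_closed[OF ideal.axioms(1)[OF I]] by (simp add: \<pi>_def)
  next
    case (Jd_add x y)
    then show ?case using additive_subgroup.a_closed[OF ideal.axioms(1)[OF I]]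
      by (simp add: \<pi>_def free_hom_add)
  next
    case (Jd_mult x a b)
    have "\<pi> a * \<pi> x * \<pi> b \<in> ?I"
      using ideal.I_l_closed[OF I] ideal.I_r_closed[OF I] Jd_mult.IH \<pi>C by simp
    then show ?case by (simp add: \<pi>_def free_hom_mult)
  qed
  have J: "ideal (Jd Rs \<inter> FC G) (FreeAlg G)"
  proof (rule idealI[OF FreeAlg_ring])
    show "subgroup (Jd Rs \<inter> FC G) (add_monoid (FreeAlg G))"
      by (rule R.add.subgroupI) (auto simp: FreeAlg_a_inv intro: Jd_uminus Jd_add)
  qed (auto intro: Jd_lmult Jd_rmult)
  have 2: "?I \<subseteq> Jd Rs \<inter> FC G"
    by (rule R.genideal_minimal[OF J]) (use Rs Jd_rel in auto)
  show ?thesis using 1[of p] \<pi>id[OF p] 2 by auto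
qed

section \<open>Presented algebras\<close>

lemma Presented_ideal: "Rs \<subseteq> FC G \<Longrightarrow> ideal (genideal (FreeAlg G) Rs) (FreeAlg G)"
  by (rule ring.genideal_ideal[OF FreeAlg_ring])

lemma Presented_ring: "Rs \<subseteq> FC G \<Longrightarrow> ring (Presented G Rs)"
  unfolding Presented_def by (rule ideal.quotient_is_ring[OF Presented_ideal])

lemma cls_hom: "Rs \<subseteq> FC G \<Longrightarrow> cls G Rs \<in> ring_hom (FreeAlg G) (Presented G Rs)"
  unfolding Presented_def cls_def[abs_def] by (rule ideal.rcos_ring_hom[OF Presented_ideal])

lemma carrier_Presented: "carrier (Presented G Rs) = cls G Rs ` FC G"
  unfolding Presented_def FactRing_def cls_def A_RCOSETS_def' by auto

lemma cls_mult: assumes "Rs \<subseteq> FC G" "p \<in> FC G" "q \<in> FC G" shows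
   "cls G Rs p \<otimes>\<^bsub>Presented G Rs\<^esub> cls G Rs q = cls G Rs (p * q)"
  using ring_hom_mult[OF cls_hom[OF assms(1)] assms(2,3)] by simp

lemma cls_add: assumes "Rs \<subseteq> FC G" "p \<in> FC G" "q \<in> FC G" shows
   "cls G Rs p \<oplus>\<^bsub>Presented G Rs\<^esub> cls G Rs q = cls G Rs (p + q)"
  using ring_hom_add[OF cls_hom[OF assms(1)] assms(2,3)] by simp

lemma cls_one: assumes "Rs \<subseteq> FC G" shows "\<one>\<^bsub>Presented G Rs\<^esub> = cls G Rs 1"
  using ring_hom_one[OF cls_hom[OF assms]] by simp

lemma cls_eq_iff:
  assumes Rs: "Rs \<subseteq> FC G" and p: "p \<in> FC G" and p': "p' \<in> FC G"
  shows "cls G Rs p = cls G Rs p' \<longleftrightarrow> p - p' \<in> Jd Rs"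
proof -
  interpret I: ideal "genideal (FreeAlg G) Rs" "FreeAlg G" by (rule Presented_ideal[OF Rs])
  have "cls G Rs p = cls G Rs p' \<longleftrightarrow> p \<in> cls G Rs p'"
  proof
    assume "cls G Rs p = cls G Rs p'"
    then show "p \<in> cls G Rs p'" unfolding cls_def using I.a_repr_independenceD[of p p'] p by simp
  next
    assume "p \<in> cls G Rs p'"
    then show "cls G Rs p = cls G Rs p'" unfolding cls_def using I.a_repr_independence'[of p p'] p' by simp
  qed
  also have "\<dots> \<longleftrightarrow> p - p' \<in> genideal (FreeAlg G) Rs"
    unfolding cls_def using I.a_rcos_module_minus[OF FreeAlg_ring p' p] p p' by (simp add: FreeAlg_a_minus)
  also have "\<dots> \<longleftrightarrow> p - p' \<in> Jd Rs"
    by (rule genideal_Jd[OF Rs]) (use p p' in auto)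
  finally show ?thesis .
qed

definition qmap :: "'g set \<Rightarrow> ('g,'k::field) fa set \<Rightarrow> 'h set \<Rightarrow> ('h,'k) fa set \<Rightarrow>
    ('g \<Rightarrow> ('h,'k) fa) \<Rightarrow> ('g,'k) fa set \<Rightarrow> ('h,'k) fa set" where
  "qmap G1 R1 G2 R2 h X = cls G2 R2 (free_hom h (SOME p. p \<in> FC G1 \<and> X = cls G1 R1 p))"

locale qhom =
  fixes G1 :: "'g set" and R1 :: "('g,'k::field) fa set" and G2 :: "'h set" and R2 :: "('h,'k) fa set"
    and h :: "'g \<Rightarrow> ('h,'k) fa"
  assumes R1C: "R1 \<subseteq> FC G1" and R2C: "R2 \<subseteq> FC G2"
    and hC: "\<And>g. g \<in> G1 \<Longrightarrow> h g \<in> FC G2"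
    and hR: "\<And>r. r \<in> R1 \<Longrightarrow> free_hom h r \<in> Jd R2"
begin

lemma qmap_cls: "p \<in> FC G1 \<Longrightarrow> qmap G1 R1 G2 R2 h (cls G1 R1 p) = cls G2 R2 (free_hom h p)"
proof -
  assume p: "p \<in> FC G1"
  define p' where "p' = (SOME p'. p' \<in> FC G1 \<and> cls G1 R1 p = cls G1 R1 p')"
  have "p' \<in> FC G1 \<and> cls G1 R1 p = cls G1 R1 p'"
    unfolding p'_def by (rule someI[of _ p]) (use p in auto)
  then have p'C: "p' \<in> FC G1" and e: "cls G1 R1 p' = cls G1 R1 p" by auto
  have "p' - p \<in> Jd R1" using e cls_eq_iff[OF R1C p'C p] by simp
  then have "free_hom h p' - free_hom h p \<in> Jd R2"
    using Jd_free_hom[OF hR] by (simp add: free_hom_diff[symmetric])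
  then have "cls G2 R2 (free_hom h p') = cls G2 R2 (free_hom h p)"
    using cls_eq_iff[OF R2C FC_free_hom[OF hC p'C] FC_free_hom[OF hC p]] by simp
  then show ?thesis unfolding qmap_def p'_def by simp
qed

lemma qmap_hom: "qmap G1 R1 G2 R2 h \<in> ring_hom (Presented G1 R1) (Presented G2 R2)"
proof (rule ring_hom_memI)
  fix X assume "X \<in> carrier (Presented G1 R1)"
  then obtain p where p: "p \<in> FC G1" "X = cls G1 R1 p" by (auto simp: carrier_Presented)
  then show "qmap G1 R1 G2 R2 h X \<in> carrier (Presented G2 R2)"
    using qmap_cls[OF p(1)] FC_free_hom[OF hC p(1)] by (auto simp: carrier_Presented)
next
  fix X Y assume "X \<in> carrier (Presented G1 R1)" "Y \<in> carrier (Presented G1 R1)"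
  then obtain p q where p: "p \<in> FC G1" "X = cls G1 R1 p" and q: "q \<in> FC G1" "Y = cls G1 R1 q"
    by (auto simp: carrier_Presented)
  show "qmap G1 R1 G2 R2 h (X \<otimes>\<^bsub>Presented G1 R1\<^esub> Y) = qmap G1 R1 G2 R2 h X \<otimes>\<^bsub>Presented G2 R2\<^esub> qmap G1 R1 G2 R2 h Y"
    using p q by (simp add: cls_mult[OF R1C] cls_mult[OF R2C] qmap_cls FC_free_hom[OF hC p(1)]
        FC_free_hom[OF hC q(1)] free_hom_mult FC_mult)
  show "qmap G1 R1 G2 R2 h (X \<oplus>\<^bsub>Presented G1 R1\<^esub> Y) = qmap G1 R1 G2 R2 h X \<oplus>\<^bsub>Presented G2 R2\<^esub> qmap G1 R1 G2 R2 h Y"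
    using p q by (simp add: cls_add[OF R1C] cls_add[OF R2C] qmap_cls FC_free_hom[OF hC p(1)]
        FC_free_hom[OF hC q(1)] free_hom_add FC_add)
next
  show "qmap G1 R1 G2 R2 h \<one>\<^bsub>Presented G1 R1\<^esub> = \<one>\<^bsub>Presented G2 R2\<^esub>"
    by (simp add: cls_one[OF R1C] cls_one[OF R2C] qmap_cls)
qed

end

lemma compose_id:
  assumes hC: "\<And>g. g \<in> G1 \<Longrightarrow> h g \<in> FC G2"
    and gid: "\<And>g. g \<in> G1 \<Longrightarrow> free_hom h' (h g) - gen g \<in> Jd R1"
    and p: "p \<in> FC G1"
  shows "free_hom h' (free_hom h p) - p \<in> Jd R1"
  using p
proof (induction rule: FC_induct)
  case (scal c) then show ?case by simp
next
  case (gen g) then show ?case using gid by simp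
next
  case (add x y)
  then show ?case using Jd_add[OF add.IH] by (simp add: free_hom_add algebra_simps)
next
  case (mult x y)
  let ?x = "free_hom h' (free_hom h x)" and ?y = "free_hom h' (free_hom h y)"
  have "?x * ?y - x * y = (?x - x) * ?y + x * (?y - y)" by (simp add: algebra_simps)
  moreover have "(?x - x) * ?y + x * (?y - y) \<in> Jd R1"
    using mult.IH by (intro Jd_add Jd_rmult Jd_lmult)
  ultimately show ?case by (simp add: free_hom_mult)
qed

lemma qmap_iso:
  assumes q1: "qhom G1 R1 G2 R2 h" and q2: "qhom G2 R2 G1 R1 h'"
    and id1: "\<And>g. g \<in> G1 \<Longrightarrow> free_hom h' (h g) - gen g \<in> Jd R1"
    and id2: "\<And>g. g \<in> G2 \<Longrightarrow> free_hom h (h' g) - gen g \<in> Jd R2"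
  shows "qmap G1 R1 G2 R2 h \<in> ring_iso (Presented G1 R1) (Presented G2 R2)"
    "qmap G2 R2 G1 R1 h' \<in> ring_iso (Presented G2 R2) (Presented G1 R1)"
    "\<forall>x\<in>carrier (Presented G1 R1). qmap G2 R2 G1 R1 h' (qmap G1 R1 G2 R2 h x) = x"
    "\<forall>y\<in>carrier (Presented G2 R2). qmap G1 R1 G2 R2 h (qmap G2 R2 G1 R1 h' y) = y"
proof -
  interpret A: qhom G1 R1 G2 R2 h by (rule q1)
  interpret B: qhom G2 R2 G1 R1 h' by (rule q2)
  show c1: "\<forall>x\<in>carrier (Presented G1 R1). qmap G2 R2 G1 R1 h' (qmap G1 R1 G2 R2 h x) = x"
  proof
    fix x assume "x \<in> carrier (Presented G1 R1)"
    then obtain p where p: "p \<in> FC G1" "x = cls G1 R1 p" by (auto simp: carrier_Presented)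
    have C: "free_hom h p \<in> FC G2" by (rule FC_free_hom[OF A.hC p(1)])
    have CC: "free_hom h' (free_hom h p) \<in> FC G1" by (rule FC_free_hom[OF B.hC C])
    have "free_hom h' (free_hom h p) - p \<in> Jd R1" by (rule compose_id[OF A.hC id1 p(1)])
    then have "cls G1 R1 (free_hom h' (free_hom h p)) = cls G1 R1 p"
      using cls_eq_iff[OF A.R1C CC p(1)] by simp
    then show "qmap G2 R2 G1 R1 h' (qmap G1 R1 G2 R2 h x) = x"
      using p A.qmap_cls[OF p(1)] B.qmap_cls[OF C] by simp
  qed
  show c2: "\<forall>y\<in>carrier (Presented G2 R2). qmap G1 R1 G2 R2 h (qmap G2 R2 G1 R1 h' y) = y"
  proof
    fix x assume "x \<in> carrier (Presented G2 R2)"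
    then obtain p where p: "p \<in> FC G2" "x = cls G2 R2 p" by (auto simp: carrier_Presented)
    have C: "free_hom h' p \<in> FC G1" by (rule FC_free_hom[OF B.hC p(1)])
    have CC: "free_hom h (free_hom h' p) \<in> FC G2" by (rule FC_free_hom[OF A.hC C])
    have "free_hom h (free_hom h' p) - p \<in> Jd R2" by (rule compose_id[OF B.hC id2 p(1)])
    then have "cls G2 R2 (free_hom h (free_hom h' p)) = cls G2 R2 p"
      using cls_eq_iff[OF A.R2C CC p(1)] by simp
    then show "qmap G1 R1 G2 R2 h (qmap G2 R2 G1 R1 h' x) = x"
      using p B.qmap_cls[OF p(1)] A.qmap_cls[OF C] by simp
  qed
  have h1: "qmap G1 R1 G2 R2 h \<in> ring_hom (Presented G1 R1) (Presented G2 R2)" by (rule A.qmap_hom)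
  have h2: "qmap G2 R2 G1 R1 h' \<in> ring_hom (Presented G2 R2) (Presented G1 R1)" by (rule B.qmap_hom)
  have b1: "bij_betw (qmap G1 R1 G2 R2 h) (carrier (Presented G1 R1)) (carrier (Presented G2 R2))"
    by (rule bij_betw_byWitness[where f'="qmap G2 R2 G1 R1 h'"])
       (use c1 c2 ring_hom_closed[OF h1] ring_hom_closed[OF h2] in auto)
  have b2: "bij_betw (qmap G2 R2 G1 R1 h') (carrier (Presented G2 R2)) (carrier (Presented G1 R1))"
    by (rule bij_betw_byWitness[where f'="qmap G1 R1 G2 R2 h"])
       (use c1 c2 ring_hom_closed[OF h1] ring_hom_closed[OF h2] in auto)
  show "qmap G1 R1 G2 R2 h \<in> ring_iso (Presented G1 R1) (Presented G2 R2)"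
    using h1 b1 by (simp add: ring_iso_def)
  show "qmap G2 R2 G1 R1 h' \<in> ring_iso (Presented G2 R2) (Presented G1 R1)"
    using h2 b2 by (simp add: ring_iso_def)
qed

definition mc :: "('h,'k::field) fa set \<Rightarrow> ('h,'k) fa \<Rightarrow> ('h,'k) fa \<Rightarrow> bool" where
  "mc Rs x y \<longleftrightarrow> x - y \<in> Jd Rs"

lemma mc_refl[simp,intro]: "mc Rs x x" by (simp add: mc_def)
lemma mc_eq: "x = y \<Longrightarrow> mc Rs x y" by simp
lemma mc_sym: "mc Rs x y \<Longrightarrow> mc Rs y x"
  unfolding mc_def using Jd_uminus[of "x - y" Rs] by simp
lemma mc_trans[trans]: "mc Rs x y \<Longrightarrow> mc Rs y z \<Longrightarrow> mc Rs x z"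
  unfolding mc_def using Jd_add[of "x - y" Rs "y - z"] by simp
lemma mc_add: "mc Rs x x' \<Longrightarrow> mc Rs y y' \<Longrightarrow> mc Rs (x + y) (x' + y')"
proof -
  assume "mc Rs x x'" "mc Rs y y'"
  then have "(x - x') + (y - y') \<in> Jd Rs" unfolding mc_def by (rule Jd_add)
  then show ?thesis unfolding mc_def by (simp add: algebra_simps)
qed
lemma mc_uminus: "mc Rs x y \<Longrightarrow> mc Rs (- x) (- y)"
  unfolding mc_def using Jd_uminus[of "x - y" Rs] by (simp add: algebra_simps)
lemma mc_diff: "mc Rs x x' \<Longrightarrow> mc Rs y y' \<Longrightarrow> mc Rs (x - y) (x' - y')"
  using mc_add[OF _ mc_uminus, of Rs x x' y y'] by (simp add: diff_conv_add_uminus del: add_uminus_conv_diff)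
lemma mc_mult: "mc Rs x x' \<Longrightarrow> mc Rs y y' \<Longrightarrow> mc Rs (x * y) (x' * y')"
proof -
  assume "mc Rs x x'" "mc Rs y y'"
  then have "(x - x') * y + x' * (y - y') \<in> Jd Rs" unfolding mc_def by (intro Jd_add Jd_lmult Jd_rmult)
  then show ?thesis unfolding mc_def by (simp add: algebra_simps)
qed
lemma mc_lmult: "mc Rs y y' \<Longrightarrow> mc Rs (a * y) (a * y')"
  by (rule mc_mult[OF mc_refl])
lemma mc_rmult: "mc Rs x x' \<Longrightarrow> mc Rs (x * b) (x' * b)"
  by (rule mc_mult[OF _ mc_refl])
lemma mc_power: "mc Rs x y \<Longrightarrow> mc Rs (x ^ n) (y ^ n)"
  by (induction n) (simp_all add: mc_mult)
lemma mc_Jd: "r \<in> Jd Rs \<Longrightarrow> r = x - y \<Longrightarrow> mc Rs x y"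
  by (simp add: mc_def)
lemma mc_prod_map: "(\<And>i. i \<in> set xs \<Longrightarrow> mc Rs (f i) (g i)) \<Longrightarrow> mc Rs (prod_list (map f xs)) (prod_list (map g xs))"
  by (induction xs) (simp_all add: mc_mult)
lemma mc_free_hom: "(\<And>r. r \<in> R1 \<Longrightarrow> free_hom h r \<in> Jd R2) \<Longrightarrow> mc R1 x y \<Longrightarrow> mc R2 (free_hom h x) (free_hom h y)"
  unfolding mc_def using Jd_free_hom[of R1 h R2 "x - y"] by (simp add: free_hom_diff)
lemma mc_half: assumes "(2::'k::field) \<noteq> 0" "mc Rs (x::('h,'k) fa) (- x)" shows "mc Rs x 0"
proof -
  have "x - - x \<in> Jd Rs" using assms(2) by (simp add: mc_def)
  then have "scal (inverse 2) * (x - - x) \<in> Jd Rs" by (rule Jd_lmult)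
  moreover have "scal (inverse (2::'k)) * (x - - x) = x"
  proof -
    have s2: "scal (2::'k) = 1 + 1" using scal_add[of "1::'k" 1] by (simp add: one_add_one)
    have "x - - x = x + x" by simp
    also have "x + x = (1 + 1) * x" by (simp only: distrib_right mult_1_left)
    also have "\<dots> = scal 2 * x" by (simp only: s2)
    finally have "x - - x = scal 2 * x" .
    then have "scal (inverse (2::'k)) * (x - - x) = scal (inverse 2 * 2) * x" by (simp only: scal_mult mult.assoc)
    also have "inverse (2::'k) * 2 = 1" using assms(1) by simp
    finally show ?thesis by simp
  qed
  ultimately show ?thesis by (simp add: mc_def)
qed

definition cm :: "('h,'k::field) fa set \<Rightarrow> ('h,'k) fa \<Rightarrow> ('h,'k) fa \<Rightarrow> bool" where
  "cm Rs x y \<longleftrightarrow> mc Rs (x * y) (y * x)"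
definition acm :: "('h,'k::field) fa set \<Rightarrow> ('h,'k) fa \<Rightarrow> ('h,'k) fa \<Rightarrow> bool" where
  "acm Rs x y \<longleftrightarrow> mc Rs (x * y) (- (y * x))"

lemma cm_sym: "cm Rs x y \<Longrightarrow> cm Rs y x" by (simp add: cm_def mc_sym)
lemma acm_sym: "acm Rs x y \<Longrightarrow> acm Rs y x"
  unfolding acm_def using mc_uminus[of Rs "x*y" "- (y*x)"] by (simp add: mc_sym)
lemma cm_refl[simp]: "cm Rs x x" by (simp add: cm_def)
lemma cm_one[simp]: "cm Rs x 1" by (simp add: cm_def)
lemma cm_mult: assumes "cm Rs x y" "cm Rs x z" shows "cm Rs x (y * z)"
proof -
  have "mc Rs (x * (y * z)) ((y * x) * z)" using mc_rmult[OF assms(1)[unfolded cm_def], of z] by (simp add: mult.assoc)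
  also have "mc Rs ((y * x) * z) (y * (z * x))" using mc_lmult[OF assms(2)[unfolded cm_def], of y] by (simp add: mult.assoc)
  finally show ?thesis by (simp add: cm_def mult.assoc)
qed
lemma acm_acm: assumes "acm Rs x y" "acm Rs x z" shows "cm Rs x (y * z)"
proof -
  have "mc Rs (x * (y * z)) (- (y * x) * z)" using mc_rmult[OF assms(1)[unfolded acm_def], of z] by (simp add: mult.assoc)
  also have "mc Rs (- (y * x) * z) (y * (z * x))" using mc_uminus[OF mc_lmult[OF assms(2)[unfolded acm_def], of y]] by (simp add: mult.assoc)
  finally show ?thesis by (simp add: cm_def mult.assoc)
qed
lemma acm_cm: assumes "acm Rs x y" "cm Rs x z" shows "acm Rs x (y * z)"
proof -
  have "mc Rs (x * (y * z)) (- (y * x) * z)" using mc_rmult[OF assms(1)[unfolded acm_def], of z] by (simp add: mult.assoc)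
  also have "mc Rs (- (y * x) * z) (- (y * (z * x)))" using mc_uminus[OF mc_lmult[OF assms(2)[unfolded cm_def], of y]] by (simp add: mult.assoc)
  finally show ?thesis by (simp add: acm_def mult.assoc)
qed
lemma cm_acm: assumes "cm Rs x y" "acm Rs x z" shows "acm Rs x (y * z)"
proof -
  have "mc Rs (x * (y * z)) ((y * x) * z)" using mc_rmult[OF assms(1)[unfolded cm_def], of z] by (simp add: mult.assoc)
  also have "mc Rs ((y * x) * z) (- (y * (z * x)))" using mc_lmult[OF assms(2)[unfolded acm_def], of y] by (simp add: mult.assoc)
  finally show ?thesis by (simp add: acm_def mult.assoc)
qed
lemma cm_diff: assumes "cm Rs x y" "cm Rs x z" shows "cm Rs x (y - z)"
  using mc_diff[OF assms[unfolded cm_def]] by (simp add: cm_def algebra_simps)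
lemma acm_diff: assumes "acm Rs x y" "acm Rs x z" shows "acm Rs x (y - z)"
  using mc_diff[OF assms[unfolded acm_def]] by (simp add: acm_def algebra_simps)
lemma scal_swap: "x * (scal c * y) = scal c * (x * y)"
  by (metis mult.assoc scal_central)
lemma cm_scal: assumes "cm Rs x y" shows "cm Rs x (scal c * y)"
  using mc_lmult[OF assms[unfolded cm_def], of "scal c"] unfolding cm_def
  by (simp add: scal_swap mult.assoc)
lemma cm_prod_list: "(\<And>y. y \<in> set ys \<Longrightarrow> cm Rs x y) \<Longrightarrow> cm Rs x (prod_list ys)"
  by (induction ys) (simp_all add: cm_mult)
lemma cm_prod_map: "(\<And>i. i \<in> set xs \<Longrightarrow> cm Rs x (f i)) \<Longrightarrow> cm Rs x (prod_list (map f xs))"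
  by (induction xs) (simp_all add: cm_mult)
lemma cm_power: "cm Rs x y \<Longrightarrow> cm Rs x (y ^ n)"
  by (induction n) (simp_all add: cm_mult)
lemma cmD: "cm Rs x y \<Longrightarrow> mc Rs (x * y) (y * x)" by (simp add: cm_def)
lemma acmD: "acm Rs x y \<Longrightarrow> mc Rs (x * y) (- (y * x))" by (simp add: acm_def)

definition scm :: "('h,'k::field) fa set \<Rightarrow> 'k \<Rightarrow> ('h,'k) fa \<Rightarrow> ('h,'k) fa \<Rightarrow> bool" where
  "scm Rs \<alpha> x y \<longleftrightarrow> mc Rs (x * y) (scal \<alpha> * y * x)"

lemma scm_one: "scm Rs 1 x y \<longleftrightarrow> cm Rs x y" by (simp add: scm_def cm_def)

lemma scal_mult3: "scal \<alpha> * y * (scal \<beta> * z * x) = scal (\<alpha> * \<beta>) * (y * z) * x"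
proof -
  have "y * (scal \<beta> * (z * x)) = scal \<beta> * (y * (z * x))" by (rule scal_swap)
  then show ?thesis by (simp add: mult.assoc scal_mult)
qed

lemma scm_mult: assumes "scm Rs \<alpha> x y" "scm Rs \<beta> x z" shows "scm Rs (\<alpha> * \<beta>) x (y * z)"
proof -
  have "mc Rs (x * (y * z)) (scal \<alpha> * y * x * z)"
    using mc_rmult[OF assms(1)[unfolded scm_def], of z] by (simp add: mult.assoc)
  also have "mc Rs (scal \<alpha> * y * x * z) (scal \<alpha> * y * (scal \<beta> * z * x))"
    using mc_lmult[OF assms(2)[unfolded scm_def], of "scal \<alpha> * y"] by (simp add: mult.assoc)
  finally show ?thesis unfolding scm_def scal_mult3 by (simp add: mult.assoc)
qed

lemma scm_diff: assumes "scm Rs \<alpha> x y" "scm Rs \<alpha> x z" shows "scm Rs \<alpha> x (y - z)"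
  using mc_diff[OF assms[unfolded scm_def]] unfolding scm_def by (simp add: algebra_simps)

lemma scm_inv:
  assumes s: "scm Rs \<alpha> x y" and inv1: "mc Rs (x * xi) 1" and inv2: "mc Rs (xi * x) 1" and a: "\<alpha> \<noteq> 0"
  shows "scm Rs (inverse \<alpha>) xi y"
proof -
  have yx: "mc Rs (y * x) (scal (inverse \<alpha>) * (x * y))"
  proof -
    have "mc Rs (scal (inverse \<alpha>) * (x * y)) (scal (inverse \<alpha>) * (scal \<alpha> * y * x))"
      using mc_lmult[OF s[unfolded scm_def]] by blast
    also have "scal (inverse \<alpha>) * (scal \<alpha> * y * x) = y * x"
      using a by (simp add: mult.assoc[symmetric] scal_mult[symmetric])
    finally show ?thesis by (rule mc_sym)
  qed
  have "mc Rs (xi * y) (xi * y * (x * xi))"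
    using mc_lmult[OF mc_sym[OF inv1], of "xi * y"] by simp
  also have "xi * y * (x * xi) = xi * (y * x) * xi" by (simp add: mult.assoc)
  also have "mc Rs (xi * (y * x) * xi) (xi * (scal (inverse \<alpha>) * (x * y)) * xi)"
    by (rule mc_rmult, rule mc_lmult, rule yx)
  also have "xi * (scal (inverse \<alpha>) * (x * y)) * xi = scal (inverse \<alpha>) * ((xi * x) * y * xi)"
    by (simp add: scal_swap mult.assoc)
  also have "mc Rs (scal (inverse \<alpha>) * ((xi * x) * y * xi)) (scal (inverse \<alpha>) * (1 * y * xi))"
    by (rule mc_lmult, rule mc_rmult, rule mc_rmult, rule inv2)
  finally show ?thesis unfolding scm_def by (simp add: mult.assoc)
qed

lemma cl_relsI:
  assumes "a \<in> {1..N}" "b \<in> {1..N}"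
    "r \<in> { gen (Om a) * gen (Om b) - gen (Om b) * gen (Om a),
       gen (Om a) * gen (OmI a) - 1,
       gen (OmI a) * gen (Om a) - 1,
       gen (Om a) * gen (Psi b) - scal (if a = b then q else 1) * gen (Psi b) * gen (Om a),
       gen (Om a) * gen (PsiS b) - scal (if a = b then inverse q else 1) * gen (PsiS b) * gen (Om a),
       gen (Psi a) * gen (Psi b) + gen (Psi b) * gen (Psi a),
       gen (PsiS a) * gen (PsiS b) + gen (PsiS b) * gen (PsiS a),
       gen (Psi a) * gen (PsiS a) + scal (q ^ k) * gen (PsiS a) * gen (Psi a) - gen (OmI a) ^ k,
       gen (Psi a) * gen (PsiS a) + scal (inverse q ^ k) * gen (PsiS a) * gen (Psi a) - gen (Om a) ^ k }
     \<union> (if a \<noteq> b then {gen (Psi a) * gen (PsiS b) + gen (PsiS b) * gen (Psi a)} else {})"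
  shows "r \<in> cl_rels q N k"
  unfolding cl_rels_def by (rule UN_I[OF assms(1)], rule UN_I[OF assms(2)], rule assms(3))

section \<open>Clifford relations in an arbitrary target\<close>

locale clif =
  fixes Rs :: "('h,'k::field) fa set" and e :: "cgen \<Rightarrow> ('h,'k) fa" and q :: 'k and N k :: nat
  assumes two: "(2::'k) \<noteq> 0" and qnz: "q \<noteq> 0"
    and rels: "\<And>r. r \<in> cl_rels q N k \<Longrightarrow> free_hom e r \<in> Jd Rs"
begin

abbreviation "psi i \<equiv> e (Psi i)"
abbreviation "psis i \<equiv> e (PsiS i)"
abbreviation "om i \<equiv> e (Om i)"
abbreviation "omi i \<equiv> e (OmI i)"
abbreviation eqv (infix "\<approx>" 50) where "x \<approx> y \<equiv> mc Rs x y"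
abbreviation "cc i \<equiv> psi i * psis i - psis i * psi i"

definition ff :: "nat \<Rightarrow> ('h,'k) fa" where "ff r = prod_list (map cc [1..<r+1])"

lemma free_hom_fr: "free_hom e (fr r) = ff r"
  unfolding fr_def ff_def by (simp add: free_hom_prod_list free_hom_diff free_hom_mult comp_def)

lemma ff_0[simp]: "ff 0 = 1" by (simp add: ff_def)
lemma ff_Suc: "ff (Suc r) = ff r * cc (Suc r)" by (simp add: ff_def)

context
  fixes a b assumes a: "a \<in> {1..N}" and b: "b \<in> {1..N}"
begin

lemma R_WW: "cm Rs (om a) (om b)"
proof -
  have "free_hom e (gen (Om a) * gen (Om b) - gen (Om b) * gen (Om a)) \<in> Jd Rs"
    by (rule rels, rule cl_relsI[OF a b]) simp
  then show ?thesis by (simp add: cm_def mc_def free_hom_diff free_hom_mult)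
qed

lemma R_WV: "om a * omi a \<approx> 1"
proof -
  have "free_hom e (gen (Om a) * gen (OmI a) - 1) \<in> Jd Rs"
    by (rule rels, rule cl_relsI[OF a b]) simp
  then show ?thesis by (simp add: mc_def free_hom_diff free_hom_mult)
qed

lemma R_VW: "omi a * om a \<approx> 1"
proof -
  have "free_hom e (gen (OmI a) * gen (Om a) - 1) \<in> Jd Rs"
    by (rule rels, rule cl_relsI[OF a b]) simp
  then show ?thesis by (simp add: mc_def free_hom_diff free_hom_mult)
qed

lemma R_WP: "scm Rs (if a = b then q else 1) (om a) (psi b)"
proof -
  have "free_hom e (gen (Om a) * gen (Psi b) - scal (if a = b then q else 1) * gen (Psi b) * gen (Om a)) \<in> Jd Rs"
    by (rule rels, rule cl_relsI[OF a b]) simp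
  then show ?thesis unfolding scm_def mc_def by (simp only: free_hom_diff free_hom_mult free_hom_gen free_hom_scal)
qed

lemma R_WS: "scm Rs (if a = b then inverse q else 1) (om a) (psis b)"
proof -
  have "free_hom e (gen (Om a) * gen (PsiS b) - scal (if a = b then inverse q else 1) * gen (PsiS b) * gen (Om a)) \<in> Jd Rs"
    by (rule rels, rule cl_relsI[OF a b]) simp
  then show ?thesis unfolding scm_def mc_def by (simp only: free_hom_diff free_hom_mult free_hom_gen free_hom_scal)
qed

lemma R_PP: "acm Rs (psi a) (psi b)"
proof -
  have "free_hom e (gen (Psi a) * gen (Psi b) + gen (Psi b) * gen (Psi a)) \<in> Jd Rs"
    by (rule rels, rule cl_relsI[OF a b]) simp
  then show ?thesis by (simp add: acm_def mc_def free_hom_add free_hom_mult)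
qed

lemma R_SS: "acm Rs (psis a) (psis b)"
proof -
  have "free_hom e (gen (PsiS a) * gen (PsiS b) + gen (PsiS b) * gen (PsiS a)) \<in> Jd Rs"
    by (rule rels, rule cl_relsI[OF a b]) simp
  then show ?thesis by (simp add: acm_def mc_def free_hom_add free_hom_mult)
qed

lemma R_PS: "a \<noteq> b \<Longrightarrow> acm Rs (psi a) (psis b)"
proof -
  assume ab: "a \<noteq> b"
  have "free_hom e (gen (Psi a) * gen (PsiS b) + gen (PsiS b) * gen (Psi a)) \<in> Jd Rs"
    by (rule rels, rule cl_relsI[OF a b]) (simp add: ab)
  then show ?thesis by (simp add: acm_def mc_def free_hom_add free_hom_mult)
qed

end

context
  fixes a assumes a: "a \<in> {1..N}"
begin

lemma R_8: "psi a * psis a + scal (q ^ k) * (psis a * psi a) \<approx> omi a ^ k"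
proof -
  have "free_hom e (gen (Psi a) * gen (PsiS a) + scal (q ^ k) * gen (PsiS a) * gen (Psi a) - gen (OmI a) ^ k) \<in> Jd Rs"
    by (rule rels, rule cl_relsI[OF a a]) simp
  then show ?thesis unfolding mc_def
    by (simp only: free_hom_diff free_hom_add free_hom_mult free_hom_gen free_hom_scal free_hom_power mult.assoc)
qed

lemma R_9: "psi a * psis a + scal (inverse q ^ k) * (psis a * psi a) \<approx> om a ^ k"
proof -
  have "free_hom e (gen (Psi a) * gen (PsiS a) + scal (inverse q ^ k) * gen (PsiS a) * gen (Psi a) - gen (Om a) ^ k) \<in> Jd Rs"
    by (rule rels, rule cl_relsI[OF a a]) simp
  then show ?thesis unfolding mc_def
    by (simp only: free_hom_diff free_hom_add free_hom_mult free_hom_gen free_hom_scal free_hom_power mult.assoc)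
qed

lemma PP0: "psi a * psi a \<approx> 0"
  using mc_half[OF two] R_PP[OF a a] by (simp add: acm_def)

lemma SS0: "psis a * psis a \<approx> 0"
  using mc_half[OF two] R_SS[OF a a] by (simp add: acm_def)

lemma WWk: "om a ^ n * omi a ^ n \<approx> 1"
proof (induction n)
  case 0 then show ?case by simp
next
  case (Suc n)
  have "om a ^ Suc n * omi a ^ Suc n = om a ^ n * (om a * omi a) * omi a ^ n"
    by (simp only: power_Suc2[of "om a"] power_Suc[of "omi a"] mult.assoc)
  also have "\<dots> \<approx> om a ^ n * 1 * omi a ^ n"
    by (rule mc_rmult, rule mc_lmult, rule R_WV[OF a a])
  also have "om a ^ n * 1 * omi a ^ n \<approx> 1" using Suc by simp
  finally show ?case .
qed

lemma C2P: "acm Rs (psi a) (cc a)"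
proof -
  have "psi a * cc a = (psi a * psi a) * psis a - psi a * psis a * psi a" by (simp add: algebra_simps)
  also have "\<dots> \<approx> 0 * psis a - psi a * psis a * psi a"
    by (rule mc_diff[OF mc_rmult[OF PP0] mc_refl])
  also have "0 * psis a - psi a * psis a * psi a = - (psi a * psis a * psi a - psis a * 0)" by simp
  also have "\<dots> \<approx> - (psi a * psis a * psi a - psis a * (psi a * psi a))"
    by (rule mc_uminus, rule mc_diff[OF mc_refl], rule mc_lmult, rule mc_sym[OF PP0])
  also have "- (psi a * psis a * psi a - psis a * (psi a * psi a)) = - (cc a * psi a)" by (simp add: algebra_simps)
  finally show ?thesis by (simp add: acm_def)
qed

lemma C2S: "acm Rs (psis a) (cc a)"
proof -
  have "psis a * cc a = psis a * psi a * psis a - (psis a * psis a) * psi a" by (simp add: algebra_simps)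
  also have "\<dots> \<approx> psis a * psi a * psis a - 0 * psi a"
    by (rule mc_diff[OF mc_refl mc_rmult[OF SS0]])
  also have "psis a * psi a * psis a - 0 * psi a = - (psi a * 0 - psis a * psi a * psis a)" by simp
  also have "\<dots> \<approx> - (psi a * (psis a * psis a) - psis a * psi a * psis a)"
    by (rule mc_uminus, rule mc_diff[OF _ mc_refl], rule mc_lmult, rule mc_sym[OF SS0])
  also have "- (psi a * (psis a * psis a) - psis a * psi a * psis a) = - (cc a * psis a)" by (simp add: algebra_simps)
  finally show ?thesis by (simp add: acm_def)
qed

end

end

context clif
begin

lemma C1P: assumes i: "i \<in> {1..N}" and l: "l \<in> {1..N}" and il: "i \<noteq> l"
  shows "cm Rs (psi l) (cc i)"
proof -
  have 1: "acm Rs (psi l) (psi i)" by (rule R_PP[OF l i])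
  have 2: "acm Rs (psi l) (psis i)" by (rule R_PS[OF l i]) (use il in auto)
  show ?thesis by (rule cm_diff; rule acm_acm) (use 1 2 in auto)
qed

lemma C1S: assumes i: "i \<in> {1..N}" and l: "l \<in> {1..N}" and il: "i \<noteq> l"
  shows "cm Rs (psis l) (cc i)"
proof -
  have 1: "acm Rs (psis l) (psi i)" by (rule acm_sym, rule R_PS[OF i l]) (use il in auto)
  have 2: "acm Rs (psis l) (psis i)" by (rule R_SS[OF l i])
  show ?thesis by (rule cm_diff; rule acm_acm) (use 1 2 in auto)
qed

lemma if_inv_mult: "(if l = i then q else 1) * (if l = i then inverse q else 1) = 1"
  "(if l = i then inverse q else 1) * (if l = i then q else 1) = 1"
  using qnz by auto

lemma C3W: assumes i: "i \<in> {1..N}" and l: "l \<in> {1..N}"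
  shows "cm Rs (om l) (cc i)"
proof -
  have "scm Rs 1 (om l) (cc i)"
    by (rule scm_diff; subst if_inv_mult[symmetric]; rule scm_mult)
       (use R_WP[OF l i] R_WS[OF l i] in auto)
  then show ?thesis by (simp add: scm_one)
qed

lemma R_VP: assumes a: "a \<in> {1..N}" and b: "b \<in> {1..N}"
  shows "scm Rs (inverse (if a = b then q else 1)) (omi a) (psi b)"
  by (rule scm_inv[OF R_WP[OF a b] R_WV[OF a a] R_VW[OF a a]]) (use qnz in auto)

lemma R_VS: assumes a: "a \<in> {1..N}" and b: "b \<in> {1..N}"
  shows "scm Rs (inverse (if a = b then inverse q else 1)) (omi a) (psis b)"
  by (rule scm_inv[OF R_WS[OF a b] R_WV[OF a a] R_VW[OF a a]]) (use qnz in auto)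

lemma C3V: assumes i: "i \<in> {1..N}" and l: "l \<in> {1..N}"
  shows "cm Rs (omi l) (cc i)"
proof -
  have e1: "inverse (if l = i then q else 1) * inverse (if l = i then inverse q else 1) = 1"
       "inverse (if l = i then inverse q else 1) * inverse (if l = i then q else 1) = 1"
    using qnz by auto
  have "scm Rs 1 (omi l) (cc i)"
    by (rule scm_diff; subst e1[symmetric]; rule scm_mult)
       (use R_VP[OF l i] R_VS[OF l i] in auto)
  then show ?thesis by (simp add: scm_one)
qed

lemma R_VW': assumes a: "a \<in> {1..N}" and b: "b \<in> {1..N}" shows "cm Rs (omi a) (om b)"
proof -
  have "scm Rs (inverse 1) (omi a) (om b)"
    by (rule scm_inv[OF _ R_WV[OF a a] R_VW[OF a a]]) (use R_WW[OF a b] in \<open>auto simp: scm_one\<close>)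
  then show ?thesis by (simp add: scm_one)
qed

lemma R_VV: assumes a: "a \<in> {1..N}" and b: "b \<in> {1..N}" shows "cm Rs (omi a) (omi b)"
proof -
  have "scm Rs (inverse 1) (omi a) (omi b)"
    by (rule scm_inv[OF _ R_WV[OF a a] R_VW[OF a a]]) (use cm_sym[OF R_VW'[OF b a]] in \<open>auto simp: scm_one\<close>)
  then show ?thesis by (simp add: scm_one)
qed

lemma C4: assumes i: "i \<in> {1..N}" and l: "l \<in> {1..N}" shows "cm Rs (cc l) (cc i)"
proof (cases "i = l")
  case True then show ?thesis by simp
next
  case False
  have "cm Rs (cc i) (cc l)"
    by (rule cm_diff; rule cm_mult; rule cm_sym)
       (use C1P[OF i l False] C1S[OF i l False] in auto)
  then show ?thesis by (rule cm_sym)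
qed

lemma C5: assumes a: "a \<in> {1..N}" shows "cc a * cc a \<approx> 1"
proof -
  define A where "A = psi a * psis a"
  define B where "B = psis a * psi a"
  define W where "W = omi a ^ k"
  define s :: "('h,'k) fa" where "s = scal (q ^ k)"
  define t :: "('h,'k) fa" where "t = scal (inverse q ^ k)"
  have ts: "t * s = 1" unfolding t_def s_def
    using qnz by (simp add: scal_mult[symmetric] power_mult_distrib[symmetric])
  have R8: "A + s * B \<approx> W" using R_8[OF a] by (simp add: A_def B_def s_def W_def)
  have R9: "A + t * B \<approx> om a ^ k" using R_9[OF a] by (simp add: A_def B_def t_def)
  have AB: "A * B \<approx> 0"
  proof -
    have "A * B = psi a * (psis a * psis a) * psi a" by (simp add: A_def B_def mult.assoc)
    also have "\<dots> \<approx> psi a * 0 * psi a" by (rule mc_rmult, rule mc_lmult, rule SS0[OF a])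
    finally show ?thesis by simp
  qed
  have BA: "B * A \<approx> 0"
  proof -
    have "B * A = psis a * (psi a * psi a) * psis a" by (simp add: A_def B_def mult.assoc)
    also have "\<dots> \<approx> psis a * 0 * psis a" by (rule mc_rmult, rule mc_lmult, rule PP0[OF a])
    finally show ?thesis by simp
  qed
  have Aeq: "A \<approx> W - s * B"
  proof -
    have "A = (A + s * B) - s * B" by simp
    also have "\<dots> \<approx> W - s * B" by (rule mc_diff[OF R8 mc_refl])
    finally show ?thesis .
  qed
  have Beq: "B \<approx> t * (W - A)"
  proof -
    have "B = t * (A + s * B - A)" by (simp add: mult.assoc[symmetric] ts)
    also have "\<dots> \<approx> t * (W - A)" by (rule mc_lmult, rule mc_diff[OF R8 mc_refl])
    finally show ?thesis .
  qed
  have AA: "A * A \<approx> A * W"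
  proof -
    have "A * A \<approx> A * (W - s * B)" by (rule mc_lmult[OF Aeq])
    also have "A * (W - s * B) = A * W - s * (A * B)" unfolding s_def by (simp add: right_diff_distrib scal_swap)
    also have "\<dots> \<approx> A * W - s * 0" by (rule mc_diff[OF mc_refl mc_lmult[OF AB]])
    finally show ?thesis by simp
  qed
  have BB: "B * B \<approx> t * B * W"
  proof -
    have "B * B \<approx> B * (t * (W - A))" by (rule mc_lmult[OF Beq])
    also have "B * (t * (W - A)) = t * (B * W - B * A)" unfolding t_def by (simp add: right_diff_distrib scal_swap)
    also have "\<dots> \<approx> t * (B * W - 0)" by (rule mc_lmult, rule mc_diff[OF mc_refl BA])
    finally show ?thesis by (simp add: mult.assoc)
  qed
  have "cc a * cc a = A * A - A * B - B * A + B * B" by (simp add: A_def B_def algebra_simps)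
  also have "\<dots> \<approx> A * W - 0 - 0 + t * B * W"
    by (intro mc_add mc_diff AA AB BA BB)
  also have "A * W - 0 - 0 + t * B * W = (A + t * B) * W" by (simp add: algebra_simps)
  also have "\<dots> \<approx> om a ^ k * W" by (rule mc_rmult[OF R9])
  also have "om a ^ k * W \<approx> 1" unfolding W_def by (rule WWk[OF a])
  finally show ?thesis .
qed

lemma ff_in: "i \<in> set [1..<r+1] \<Longrightarrow> 1 \<le> i \<and> i \<le> r" by auto

lemma F1P: assumes "r < l" "l \<le> N" shows "cm Rs (psi l) (ff r)"
  unfolding ff_def by (rule cm_prod_list) (use assms in \<open>auto intro!: C1P\<close>)

lemma F1S: assumes "r < l" "l \<le> N" shows "cm Rs (psis l) (ff r)"
  unfolding ff_def by (rule cm_prod_list) (use assms in \<open>auto intro!: C1S\<close>)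

lemma F2: assumes "1 \<le> l" "l \<le> r" "r \<le> N" shows "acm Rs (psi l) (ff r) \<and> acm Rs (psis l) (ff r)"
  using assms
proof (induction r)
  case 0 then show ?case by simp
next
  case (Suc r)
  have lN: "l \<in> {1..N}" using Suc.prems by auto
  show ?case
  proof (cases "l = Suc r")
    case True
    have "cm Rs (psi l) (ff r)" "cm Rs (psis l) (ff r)" using True Suc.prems by (auto intro!: F1P F1S)
    then show ?thesis unfolding ff_Suc using True C2P[OF lN] C2S[OF lN] by (auto intro: cm_acm)
  next
    case False
    then have IH: "acm Rs (psi l) (ff r) \<and> acm Rs (psis l) (ff r)" using Suc by auto
    have "cm Rs (psi l) (cc (Suc r))" "cm Rs (psis l) (cc (Suc r))"
      using False Suc.prems by (auto intro!: C1P C1S)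
    then show ?thesis unfolding ff_Suc using IH by (auto intro: acm_cm)
  qed
qed

lemma F3W: assumes "r \<le> N" "l \<in> {1..N}" shows "cm Rs (om l) (ff r)"
  unfolding ff_def by (rule cm_prod_map) (use assms in \<open>auto intro!: C3W\<close>)

lemma F3V: assumes "r \<le> N" "l \<in> {1..N}" shows "cm Rs (omi l) (ff r)"
  unfolding ff_def by (rule cm_prod_map) (use assms in \<open>auto intro!: C3V\<close>)

lemma F_cc: assumes "r \<le> N" "l \<in> {1..N}" shows "cm Rs (cc l) (ff r)"
  unfolding ff_def by (rule cm_prod_list) (use assms in \<open>auto intro!: C4\<close>)

lemma F4: assumes "r \<le> N" shows "ff r * ff r \<approx> 1"
  using assms
proof (induction r)
  case 0 then show ?case by simp
next
  case (Suc r)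
  have l: "Suc r \<in> {1..N}" using Suc.prems by auto
  have "ff (Suc r) * ff (Suc r) = ff r * (cc (Suc r) * ff r) * cc (Suc r)" by (simp add: ff_Suc mult.assoc)
  also have "\<dots> \<approx> ff r * (ff r * cc (Suc r)) * cc (Suc r)"
    by (rule mc_rmult, rule mc_lmult, rule cmD, rule F_cc) (use Suc.prems l in auto)
  also have "ff r * (ff r * cc (Suc r)) * cc (Suc r) = (ff r * ff r) * (cc (Suc r) * cc (Suc r))" by (simp add: mult.assoc)
  also have "\<dots> \<approx> 1 * 1" by (rule mc_mult; use Suc C5[OF l] in auto)
  finally show ?case by simp
qed

lemma F5: assumes "r \<le> N" "r' \<le> N" shows "cm Rs (ff r) (ff r')"
proof -
  have "cm Rs (ff r') (ff r)" unfolding ff_def[of r]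
    by (rule cm_prod_map, rule cm_sym, rule F_cc) (use assms in auto)
  then show ?thesis by (rule cm_sym)
qed

end

lemma cm_add: "cm Rs x y \<Longrightarrow> cm Rs x z \<Longrightarrow> cm Rs x (y + z)"
  unfolding cm_def by (drule (1) mc_add) (simp add: algebra_simps)

lemma cm_scal_any[simp]: "cm Rs x (scal c)"
  unfolding cm_def by (simp add: scal_central)

lemma gen_same: assumes "cm Rs X F" "cm Rs Y F" "mc Rs (F * F) 1"
  shows "mc Rs ((F * X) * (F * Y)) (X * Y)"
proof -
  have "(F * X) * (F * Y) = F * (X * F) * Y" by (simp add: mult.assoc)
  also have "mc Rs \<dots> (F * (F * X) * Y)" by (rule mc_rmult, rule mc_lmult, rule mc_sym, rule cmD[OF cm_sym[OF assms(1)]])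
  also have "F * (F * X) * Y = (F * F) * (X * Y)" by (simp add: mult.assoc)
  also have "mc Rs \<dots> (1 * (X * Y))" by (rule mc_rmult[OF assms(3)])
  finally show ?thesis by simp
qed

lemma gen_BB: assumes XF': "acm Rs X F'" and FY: "cm Rs F Y" and FF': "cm Rs F F'" and XY: "acm Rs X Y"
  shows "cm Rs (F * X) (F' * Y)"
proof -
  have 1: "mc Rs ((F * X) * (F' * Y)) (- (F * F' * (X * Y)))"
  proof -
    have "(F * X) * (F' * Y) = F * (X * F') * Y" by (simp add: mult.assoc)
    also have "mc Rs \<dots> (F * (- (F' * X)) * Y)" by (rule mc_rmult, rule mc_lmult, rule acmD[OF XF'])
    finally show ?thesis by (simp add: mult.assoc)
  qed
  have 2: "mc Rs ((F' * Y) * (F * X)) (- (F * F' * (X * Y)))"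
  proof -
    have "(F' * Y) * (F * X) = F' * (Y * F) * X" by (simp add: mult.assoc)
    also have "mc Rs \<dots> (F' * (F * Y) * X)" by (rule mc_rmult, rule mc_lmult, rule mc_sym, rule cmD[OF FY])
    also have "F' * (F * Y) * X = (F' * F) * (Y * X)" by (simp add: mult.assoc)
    also have "mc Rs \<dots> ((F * F') * (- (X * Y)))"
      by (rule mc_mult, rule mc_sym, rule cmD[OF FF'], rule acmD[OF acm_sym[OF XY]])
    finally show ?thesis by simp
  qed
  show ?thesis unfolding cm_def using mc_trans[OF 1 mc_sym[OF 2]] .
qed

lemma gen_BB': assumes XF': "acm Rs X F'" and FY: "cm Rs F Y" and FF': "cm Rs F F'" and XY: "cm Rs X Y"
  shows "acm Rs (F * X) (F' * Y)"
proof -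
  have 1: "mc Rs ((F * X) * (F' * Y)) (- (F * F' * (X * Y)))"
  proof -
    have "(F * X) * (F' * Y) = F * (X * F') * Y" by (simp add: mult.assoc)
    also have "mc Rs \<dots> (F * (- (F' * X)) * Y)" by (rule mc_rmult, rule mc_lmult, rule acmD[OF XF'])
    finally show ?thesis by (simp add: mult.assoc)
  qed
  have 2: "mc Rs ((F' * Y) * (F * X)) (F * F' * (X * Y))"
  proof -
    have "(F' * Y) * (F * X) = F' * (Y * F) * X" by (simp add: mult.assoc)
    also have "mc Rs \<dots> (F' * (F * Y) * X)" by (rule mc_rmult, rule mc_lmult, rule mc_sym, rule cmD[OF FY])
    also have "F' * (F * Y) * X = (F' * F) * (Y * X)" by (simp add: mult.assoc)
    also have "mc Rs \<dots> ((F * F') * (X * Y))"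
      by (rule mc_mult, rule mc_sym, rule cmD[OF FF'], rule mc_sym, rule cmD[OF XY])
    finally show ?thesis by simp
  qed
  show ?thesis unfolding acm_def using mc_trans[OF 1 mc_uminus[OF mc_sym[OF 2]]] by simp
qed

context clif
begin

lemma acm_gens: assumes x: "x \<in> {1..N}" and y: "y \<in> {1..N}" and xy: "x \<noteq> y"
  and C: "C \<in> {Psi, PsiS}" and D: "D \<in> {Psi, PsiS}"
  shows "acm Rs (e (C x)) (e (D y))"
  using C D R_PP[OF x y] R_SS[OF x y] R_PS[OF x y] acm_sym[OF R_PS[OF y x]] xy by auto

lemma acm_F2: assumes "1 \<le> x" "x \<le> s" "s \<le> N" and C: "C \<in> {Psi, PsiS}"
  shows "acm Rs (e (C x)) (ff s)"
  using F2[OF assms(1-3)] C by auto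

lemma cm_F1: assumes "s < x" "x \<le> N" and C: "C \<in> {Psi, PsiS}"
  shows "cm Rs (e (C x)) (ff s)"
  using F1P[OF assms(1-2)] F1S[OF assms(1-2)] C by auto

lemma W_B: assumes x: "x \<in> {1..N}" and y: "y \<in> {1..N}" and xy: "x \<noteq> y" and s: "s \<le> N"
  and C: "C \<in> {Psi, PsiS}" and W: "W \<in> {Om, OmI}"
  shows "cm Rs (e (W x)) (ff s * e (C y))"
proof -
  have 1: "cm Rs (e (W x)) (ff s)" using W F3W[OF s x] F3V[OF s x] by auto
  have 2: "cm Rs (e (W x)) (e (C y))"
    using W C R_WP[OF x y] R_WS[OF x y] R_VP[OF x y] R_VS[OF x y] xy by (auto simp: scm_one)
  show ?thesis by (rule cm_mult[OF 1 2])
qed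

lemma W_W: assumes x: "x \<in> {1..N}" and y: "y \<in> {1..N}" and V: "V \<in> {Om, OmI}" and W: "W \<in> {Om, OmI}"
  shows "cm Rs (e (V x)) (e (W y))"
  using V W R_WW[OF x y] R_VW'[OF x y] cm_sym[OF R_VW'[OF y x]] R_VV[OF x y] by auto

lemma B_B: assumes "1 \<le> x" "x \<le> s'" "s' < y" "y \<le> N" "s \<le> s'"
  and C: "C \<in> {Psi, PsiS}" and D: "D \<in> {Psi, PsiS}"
  shows "cm Rs (ff s * e (C x)) (ff s' * e (D y))"
proof (rule gen_BB)
  show "acm Rs (e (C x)) (ff s')" by (rule acm_F2) (use assms in auto)
  show "cm Rs (ff s) (e (D y))" by (rule cm_sym, rule cm_F1) (use assms in auto)
  show "cm Rs (ff s) (ff s')" by (rule F5) (use assms in auto)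
  show "acm Rs (e (C x)) (e (D y))" by (rule acm_gens) (use assms in auto)
qed

lemma same_block: assumes "s < x" "x \<le> N" "s < y" "y \<le> N"
  and C: "C \<in> {Psi, PsiS}" and D: "D \<in> {Psi, PsiS}"
  shows "(ff s * e (C x)) * (ff s * e (D y)) \<approx> e (C x) * e (D y)"
  by (rule gen_same; (rule cm_F1 | rule F4)?) (use assms in auto)

end

section \<open>The concrete maps\<close>

fun hG :: "nat \<Rightarrow> nat \<times> cgen \<Rightarrow> (cgen,'k::field) fa" where
  "hG n (j, Psi a) = fr ((j-1)*n) * gen (Psi (a+(j-1)*n))"
| "hG n (j, PsiS a) = fr ((j-1)*n) * gen (PsiS (a+(j-1)*n))"
| "hG n (j, Om a) = gen (Om (a+(j-1)*n))"
| "hG n (j, OmI a) = gen (OmI (a+(j-1)*n))"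

definition blk :: "nat \<Rightarrow> nat \<Rightarrow> nat" where "blk n i = (i - 1) div n + 1"
definition pos :: "nat \<Rightarrow> nat \<Rightarrow> nat" where "pos n i = (i - 1) mod n + 1"

definition TF :: "nat \<Rightarrow> nat \<Rightarrow> (nat \<times> cgen,'k::field) fa" where
  "TF n j = prod_list (map (\<lambda>l. in_factor l (fr n)) [1..<j])"

fun hH :: "nat \<Rightarrow> cgen \<Rightarrow> (nat \<times> cgen,'k::field) fa" where
  "hH n (Psi i) = TF n (blk n i) * gen (blk n i, Psi (pos n i))"
| "hH n (PsiS i) = TF n (blk n i) * gen (blk n i, PsiS (pos n i))"
| "hH n (Om i) = gen (blk n i, Om (pos n i))"
| "hH n (OmI i) = gen (blk n i, OmI (pos n i))"

lemma blk_pos_shift: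
  assumes "0 < n" "1 \<le> a" "a \<le> n" "1 \<le> j"
  shows "blk n (a + (j-1)*n) = j" "pos n (a + (j-1)*n) = a"
proof -
  have e: "a + (j-1)*n - 1 = (a - 1) + n * (j - 1)" using assms by (simp add: mult.commute)
  have "(a - 1 + n * (j - 1)) div n = j - 1" using assms by (subst div_mult_self2) auto
  then show "blk n (a + (j-1)*n) = j" unfolding blk_def e using assms by simp
  have "(a - 1 + n * (j - 1)) mod n = a - 1" using assms by (subst mod_mult_self2) auto
  then show "pos n (a + (j-1)*n) = a" unfolding pos_def e using assms by simp
qed

lemma blk_pos_range:
  assumes "0 < n" "1 \<le> i" "i \<le> n * m"
  shows "1 \<le> blk n i" "blk n i \<le> m" "1 \<le> pos n i" "pos n i \<le> n" "i = pos n i + (blk n i - 1) * n"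
proof -
  show "1 \<le> blk n i" by (simp add: blk_def)
  have "(i - 1) div n < m" using assms by (simp add: less_mult_imp_div_less mult.commute)
  then show "blk n i \<le> m" by (simp add: blk_def)
  show "1 \<le> pos n i" by (simp add: pos_def)
  show "pos n i \<le> n" using assms by (simp add: pos_def Suc_leI)
  show "i = pos n i + (blk n i - 1) * n"
    using mod_div_mult_eq[of "i - 1" n] assms unfolding pos_def blk_def by simp
qed

lemma ar_le: fixes j m a n :: nat assumes "1 \<le> j" "j \<le> m" "a \<le> n" shows "a + (j-1)*n \<le> n * m"
proof -
  have "j = Suc (j - 1)" using assms by simp
  then have e: "n + (j-1)*n = j * n" by (metis mult_Suc)
  have "a + (j-1)*n \<le> n + (j-1)*n" using assms by simp
  also have "\<dots> = j * n" by (rule e)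
  also have "\<dots> \<le> m * n" using assms by (intro mult_le_mono1)
  finally show ?thesis by (simp add: mult.commute)
qed

lemma ar_blk: fixes j j' a n :: nat assumes "1 \<le> j" "j < j'" "a \<le> n" shows "a + (j-1)*n \<le> (j'-1)*n"
proof -
  have "j = Suc (j - 1)" using assms by simp
  then have e: "n + (j-1)*n = j * n" by (metis mult_Suc)
  have "a + (j-1)*n \<le> n + (j-1)*n" using assms by simp
  also have "\<dots> = j * n" by (rule e)
  also have "\<dots> \<le> (j'-1) * n" using assms by (intro mult_le_mono1) simp
  finally show ?thesis .
qed

lemma ar_s: fixes j m n :: nat assumes "1 \<le> j" "j \<le> m" shows "(j-1)*n \<le> n * m"
  using ar_le[OF assms, of 0] by simp

lemma cgens_simps[simp]:
  "Psi a \<in> cgens N \<longleftrightarrow> 1 \<le> a \<and> a \<le> N" "PsiS a \<in> cgens N \<longleftrightarrow> 1 \<le> a \<and> a \<le> N"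
  "Om a \<in> cgens N \<longleftrightarrow> 1 \<le> a \<and> a \<le> N" "OmI a \<in> cgens N \<longleftrightarrow> 1 \<le> a \<and> a \<le> N"
  by (auto simp: cgens_def)

lemma tgens_simps[simp]: "(j, g) \<in> tgens n m \<longleftrightarrow> 1 \<le> j \<and> j \<le> m \<and> g \<in> cgens n"
  by (auto simp: tgens_def)

lemma cl_rels_FC: "cl_rels q N k \<subseteq> FC (cgens N)"
  unfolding cl_rels_def by (auto intro!: FC_diff FC_add FC_mult FC_gen FC_power split: if_splits)

lemma fr_FC: "r \<le> N \<Longrightarrow> fr r \<in> FC (cgens N)"
  unfolding fr_def by (rule FC_prod_list) (auto intro!: FC_diff FC_mult FC_gen)

lemma in_factor_FC: "l \<in> {1..m} \<Longrightarrow> x \<in> FC (cgens n) \<Longrightarrow> in_factor l x \<in> FC (tgens n m)"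
  unfolding in_factor_def by (rule FC_free_hom) auto

lemma t_rels_FC: "t_rels q n m k \<subseteq> FC (tgens n m)"
proof
  fix r assume "r \<in> t_rels q n m k"
  then consider (a) j r0 where "j \<in> {1..m}" "r0 \<in> cl_rels q n k" "r = free_hom (\<lambda>g. gen (j,g)) r0"
    | (b) j j' g g' where "r = gen (j,g) * gen (j',g') - gen (j',g') * gen (j,g)"
        "j \<in> {1..m}" "j' \<in> {1..m}" "g \<in> cgens n" "g' \<in> cgens n"
    unfolding t_rels_def by blast
  then show "r \<in> FC (tgens n m)"
  proof cases
    case a
    then show ?thesis using cl_rels_FC[of q n k] by (auto intro!: FC_free_hom[where G="cgens n"])
  next
    case b
    then show ?thesis by (auto intro!: FC_diff FC_mult FC_gen)
  qed
qed

lemma TF_FC: "j \<le> m + 1 \<Longrightarrow> TF n j \<in> FC (tgens n m)"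
  unfolding TF_def by (rule FC_prod_list) (auto intro!: in_factor_FC fr_FC)

lemma hG_FC: assumes "g \<in> tgens n m" shows "hG n g \<in> FC (cgens (n*m))"
proof -
  obtain j c where g: "g = (j, c)" "1 \<le> j" "j \<le> m" "c \<in> cgens n" using assms by (cases g) auto
  show ?thesis using g ar_le[of j m] ar_s[of j m n]
    by (cases c) (auto intro!: FC_mult FC_gen fr_FC)
qed

lemma hH_FC: assumes "0 < n" "g \<in> cgens (n*m)" shows "hH n g \<in> FC (tgens n m)"
proof -
  have r: "1 \<le> blk n i" "blk n i \<le> m" "1 \<le> pos n i" "pos n i \<le> n" "blk n i \<le> m + 1" if "1 \<le> i" "i \<le> n*m" for i
    using blk_pos_range[OF assms(1) that] by auto
  show ?thesis using assms(2) r
    by (cases g) (auto intro!: FC_mult FC_gen TF_FC)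
qed

lemma cm_Jd: "cm Rs x y \<Longrightarrow> x * y - y * x \<in> Jd Rs" by (simp add: cm_def mc_def)
lemma acm_Jd: "acm Rs x y \<Longrightarrow> x * y + y * x \<in> Jd Rs" by (simp add: acm_def mc_def)
lemma scm_Jd: "scm Rs \<alpha> x y \<Longrightarrow> x * y - scal \<alpha> * y * x \<in> Jd Rs" by (simp add: scm_def mc_def)
lemma mc_Jd1: "mc Rs x y \<Longrightarrow> x - y \<in> Jd Rs" by (simp add: mc_def)

lemma acm_transfer: "mc Rs (x * y) (x' * y') \<Longrightarrow> mc Rs (y * x) (y' * x') \<Longrightarrow> acm Rs x' y' \<Longrightarrow> acm Rs x y"
  unfolding acm_def by (meson mc_sym mc_trans mc_uminus)
lemma cm_transfer: "mc Rs (x * y) (x' * y') \<Longrightarrow> mc Rs (y * x) (y' * x') \<Longrightarrow> cm Rs x' y' \<Longrightarrow> cm Rs x y"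
  unfolding cm_def by (meson mc_sym mc_trans)

lemma cl_rels_cases:
  assumes "r0 \<in> cl_rels q N k"
  obtains a b where "a \<in> {1..N}" "b \<in> {1..N}" "r0 \<in> { gen (Om a) * gen (Om b) - gen (Om b) * gen (Om a),
       gen (Om a) * gen (OmI a) - 1,
       gen (OmI a) * gen (Om a) - 1,
       gen (Om a) * gen (Psi b) - scal (if a = b then q else 1) * gen (Psi b) * gen (Om a),
       gen (Om a) * gen (PsiS b) - scal (if a = b then inverse q else 1) * gen (PsiS b) * gen (Om a),
       gen (Psi a) * gen (Psi b) + gen (Psi b) * gen (Psi a),
       gen (PsiS a) * gen (PsiS b) + gen (PsiS b) * gen (PsiS a),
       gen (Psi a) * gen (PsiS a) + scal (q ^ k) * gen (PsiS a) * gen (Psi a) - gen (OmI a) ^ k,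
       gen (Psi a) * gen (PsiS a) + scal (inverse q ^ k) * gen (PsiS a) * gen (Psi a) - gen (Om a) ^ k }
     \<union> (if a \<noteq> b then {gen (Psi a) * gen (PsiS b) + gen (PsiS b) * gen (Psi a)} else {})"
  using assms unfolding cl_rels_def by blast

lemma cl_rels_check:
  assumes r0: "r0 \<in> cl_rels q N k"
    and c1: "\<And>a b. a \<in> {1..N} \<Longrightarrow> b \<in> {1..N} \<Longrightarrow> cm Rs (e (Om a)) (e (Om b))"
    and c2: "\<And>a. a \<in> {1..N} \<Longrightarrow> mc Rs (e (Om a) * e (OmI a)) 1"
    and c3: "\<And>a. a \<in> {1..N} \<Longrightarrow> mc Rs (e (OmI a) * e (Om a)) 1"
    and c4: "\<And>a b. a \<in> {1..N} \<Longrightarrow> b \<in> {1..N} \<Longrightarrow> scm Rs (if a = b then q else 1) (e (Om a)) (e (Psi b))"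
    and c5: "\<And>a b. a \<in> {1..N} \<Longrightarrow> b \<in> {1..N} \<Longrightarrow> scm Rs (if a = b then inverse q else 1) (e (Om a)) (e (PsiS b))"
    and c6: "\<And>a b. a \<in> {1..N} \<Longrightarrow> b \<in> {1..N} \<Longrightarrow> acm Rs (e (Psi a)) (e (Psi b))"
    and c7: "\<And>a b. a \<in> {1..N} \<Longrightarrow> b \<in> {1..N} \<Longrightarrow> acm Rs (e (PsiS a)) (e (PsiS b))"
    and c8: "\<And>a. a \<in> {1..N} \<Longrightarrow> mc Rs (e (Psi a) * e (PsiS a) + scal (q ^ k) * e (PsiS a) * e (Psi a)) (e (OmI a) ^ k)"
    and c9: "\<And>a. a \<in> {1..N} \<Longrightarrow> mc Rs (e (Psi a) * e (PsiS a) + scal (inverse q ^ k) * e (PsiS a) * e (Psi a)) (e (Om a) ^ k)"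
    and c10: "\<And>a b. a \<in> {1..N} \<Longrightarrow> b \<in> {1..N} \<Longrightarrow> a \<noteq> b \<Longrightarrow> acm Rs (e (Psi a)) (e (PsiS b))"
  shows "free_hom e r0 \<in> Jd Rs"
proof -
  obtain a b where a: "a \<in> {1..N}" and b: "b \<in> {1..N}" and r: "r0 \<in> { gen (Om a) * gen (Om b) - gen (Om b) * gen (Om a),
       gen (Om a) * gen (OmI a) - 1,
       gen (OmI a) * gen (Om a) - 1,
       gen (Om a) * gen (Psi b) - scal (if a = b then q else 1) * gen (Psi b) * gen (Om a),
       gen (Om a) * gen (PsiS b) - scal (if a = b then inverse q else 1) * gen (PsiS b) * gen (Om a),
       gen (Psi a) * gen (Psi b) + gen (Psi b) * gen (Psi a),
       gen (PsiS a) * gen (PsiS b) + gen (PsiS b) * gen (PsiS a),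
       gen (Psi a) * gen (PsiS a) + scal (q ^ k) * gen (PsiS a) * gen (Psi a) - gen (OmI a) ^ k,
       gen (Psi a) * gen (PsiS a) + scal (inverse q ^ k) * gen (PsiS a) * gen (Psi a) - gen (Om a) ^ k }
     \<union> (if a \<noteq> b then {gen (Psi a) * gen (PsiS b) + gen (PsiS b) * gen (Psi a)} else {})"
    using cl_rels_cases[OF r0] by blast
  note fh = free_hom_diff free_hom_add free_hom_mult free_hom_gen free_hom_scal free_hom_power free_hom_one
  from r show ?thesis
  proof (elim UnE insertE emptyE)
    assume "r0 = gen (Om a) * gen (Om b) - gen (Om b) * gen (Om a)"
    then show ?thesis using cm_Jd[OF c1[OF a b]] by (simp only: fh)
  next
    assume "r0 = gen (Om a) * gen (OmI a) - 1"
    then show ?thesis using mc_Jd1[OF c2[OF a]] by (simp only: fh)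
  next
    assume "r0 = gen (OmI a) * gen (Om a) - 1"
    then show ?thesis using mc_Jd1[OF c3[OF a]] by (simp only: fh)
  next
    assume "r0 = gen (Om a) * gen (Psi b) - scal (if a = b then q else 1) * gen (Psi b) * gen (Om a)"
    then show ?thesis using scm_Jd[OF c4[OF a b]] by (simp only: fh)
  next
    assume "r0 = gen (Om a) * gen (PsiS b) - scal (if a = b then inverse q else 1) * gen (PsiS b) * gen (Om a)"
    then show ?thesis using scm_Jd[OF c5[OF a b]] by (simp only: fh)
  next
    assume "r0 = gen (Psi a) * gen (Psi b) + gen (Psi b) * gen (Psi a)"
    then show ?thesis using acm_Jd[OF c6[OF a b]] by (simp only: fh)
  next
    assume "r0 = gen (PsiS a) * gen (PsiS b) + gen (PsiS b) * gen (PsiS a)"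
    then show ?thesis using acm_Jd[OF c7[OF a b]] by (simp only: fh)
  next
    assume "r0 = gen (Psi a) * gen (PsiS a) + scal (q ^ k) * gen (PsiS a) * gen (Psi a) - gen (OmI a) ^ k"
    then show ?thesis using mc_Jd1[OF c8[OF a]] by (simp only: fh)
  next
    assume "r0 = gen (Psi a) * gen (PsiS a) + scal (inverse q ^ k) * gen (PsiS a) * gen (Psi a) - gen (Om a) ^ k"
    then show ?thesis using mc_Jd1[OF c9[OF a]] by (simp only: fh)
  next
    assume "r0 \<in> (if a \<noteq> b then {gen (Psi a) * gen (PsiS b) + gen (PsiS b) * gen (Psi a)} else {})"
    then have ab: "a \<noteq> b" and rr: "r0 = gen (Psi a) * gen (PsiS b) + gen (PsiS b) * gen (Psi a)" by (auto split: if_splits)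
    show ?thesis using acm_Jd[OF c10[OF a b ab]] rr by (simp only: fh)
  qed
qed

locale thm_setup =
  fixes q :: "'k::field" and n m k :: nat
  assumes two: "(2::'k) \<noteq> 0" and qnz: "q \<noteq> 0" and npos: "0 < n" and mpos: "0 < m"
begin

sublocale L: clif "cl_rels q (n*m) k" gen q "n*m" k
  by unfold_locales (simp_all add: two qnz free_hom_gen_id Jd_rel)

lemma fr_ff: "fr r = L.ff r" unfolding fr_def L.ff_def ..

lemma Tl: "l \<in> {1..m} \<Longrightarrow> clif (t_rels q n m k) (\<lambda>g. gen (l, g)) q n k"
  by unfold_locales (auto simp: two qnz t_rels_def intro!: Jd_rel)

lemma hG_factor:
  assumes j: "j \<in> {1..m}" and r0: "r0 \<in> cl_rels q n k"
  shows "free_hom (\<lambda>g. hG n (j, g)) r0 \<in> Jd (cl_rels q (n*m) k)"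
proof (rule cl_rels_check[OF r0])
  let ?s = "(j-1)*n"
  let ?R = "cl_rels q (n*m) k"
  have rng: "a + ?s \<in> {1..n*m}" "?s < a + ?s" if "a \<in> {1..n}" for a
    using that ar_le[of j m a n] j by auto
  have sN: "?s \<le> n * m" using ar_s[of j m n] j by auto
  have eqv: "(a + ?s = b + ?s) \<longleftrightarrow> a = b" for a b by simp
  note hs = hG.simps fr_ff
  fix a b assume a: "a \<in> {1..n}" and b: "b \<in> {1..n}"
  note ra = rng[OF a] and rb = rng[OF b]
  show "cm ?R (hG n (j, Om a)) (hG n (j, Om b))" using L.R_WW[OF ra(1) rb(1)] by simp
  show "scm ?R (if a = b then q else 1) (hG n (j, Om a)) (hG n (j, Psi b))"
    using scm_mult[OF L.F3W[OF sN ra(1), unfolded scm_one[symmetric]] L.R_WP[OF ra(1) rb(1)]] by (simp add: hs)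
  show "scm ?R (if a = b then inverse q else 1) (hG n (j, Om a)) (hG n (j, PsiS b))"
    using scm_mult[OF L.F3W[OF sN ra(1), unfolded scm_one[symmetric]] L.R_WS[OF ra(1) rb(1)]] by (simp add: hs)
  have hGC: "hG n (j, C x) = L.ff ?s * gen (C (x + ?s))" if "C \<in> {Psi, PsiS}" for C x
    using that by (auto simp: fr_ff)
  have SB: "mc ?R (hG n (j, C x) * hG n (j, D y)) (gen (C (x + ?s)) * gen (D (y + ?s)))"
    if "C \<in> {Psi, PsiS}" "D \<in> {Psi, PsiS}" "x \<in> {1..n}" "y \<in> {1..n}" for C D x y
    unfolding hGC[OF that(1)] hGC[OF that(2)]
    by (rule L.same_block[where C=C and D=D]) (use that rng[OF that(3)] rng[OF that(4)] in auto)
  show "acm ?R (hG n (j, Psi a)) (hG n (j, Psi b))"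
    by (rule acm_transfer[OF SB[of Psi Psi a b] SB[of Psi Psi b a] L.R_PP[OF ra(1) rb(1)]]) (use a b in auto)
  show "acm ?R (hG n (j, PsiS a)) (hG n (j, PsiS b))"
    by (rule acm_transfer[OF SB[of PsiS PsiS a b] SB[of PsiS PsiS b a] L.R_SS[OF ra(1) rb(1)]]) (use a b in auto)
  show "acm ?R (hG n (j, Psi a)) (hG n (j, PsiS b))" if "a \<noteq> b"
    by (rule acm_transfer[OF SB[of Psi PsiS a b] SB[of PsiS Psi b a] L.R_PS[OF ra(1) rb(1)]]) (use a b that in auto)
next
  let ?s = "(j-1)*n"
  let ?R = "cl_rels q (n*m) k"
  have rng: "a + ?s \<in> {1..n*m}" "?s < a + ?s" if "a \<in> {1..n}" for a
    using that ar_le[of j m a n] j by auto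
  note hs = hG.simps fr_ff
  fix a assume a: "a \<in> {1..n}"
  note ra = rng[OF a]
  show "mc ?R (hG n (j, Om a) * hG n (j, OmI a)) 1" using L.R_WV[OF ra(1) ra(1)] by simp
  show "mc ?R (hG n (j, OmI a) * hG n (j, Om a)) 1" using L.R_VW[OF ra(1) ra(1)] by simp
  have PS: "mc ?R (hG n (j, Psi a) * hG n (j, PsiS a)) (gen (Psi (a + ?s)) * gen (PsiS (a + ?s)))"
    unfolding hs by (rule L.same_block[where C=Psi and D=PsiS]) (use ra in auto)
  have SP: "mc ?R (hG n (j, PsiS a) * hG n (j, Psi a)) (gen (PsiS (a + ?s)) * gen (Psi (a + ?s)))"
    unfolding hs by (rule L.same_block[where C=PsiS and D=Psi]) (use ra in auto)
  show "mc ?R (hG n (j, Psi a) * hG n (j, PsiS a) + scal (q ^ k) * hG n (j, PsiS a) * hG n (j, Psi a)) (hG n (j, OmI a) ^ k)"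
  proof -
    have "mc ?R (hG n (j, Psi a) * hG n (j, PsiS a) + scal (q ^ k) * (hG n (j, PsiS a) * hG n (j, Psi a)))
       (gen (Psi (a + ?s)) * gen (PsiS (a + ?s)) + scal (q ^ k) * (gen (PsiS (a + ?s)) * gen (Psi (a + ?s))))"
      by (rule mc_add[OF PS mc_lmult[OF SP]])
    also have "mc ?R \<dots> (gen (OmI (a + ?s)) ^ k)" by (rule L.R_8[OF ra(1)])
    finally show ?thesis by (simp add: mult.assoc)
  qed
  show "mc ?R (hG n (j, Psi a) * hG n (j, PsiS a) + scal (inverse q ^ k) * hG n (j, PsiS a) * hG n (j, Psi a)) (hG n (j, Om a) ^ k)"
  proof -
    have "mc ?R (hG n (j, Psi a) * hG n (j, PsiS a) + scal (inverse q ^ k) * (hG n (j, PsiS a) * hG n (j, Psi a)))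
       (gen (Psi (a + ?s)) * gen (PsiS (a + ?s)) + scal (inverse q ^ k) * (gen (PsiS (a + ?s)) * gen (Psi (a + ?s))))"
      by (rule mc_add[OF PS mc_lmult[OF SP]])
    also have "mc ?R \<dots> (gen (Om (a + ?s)) ^ k)" by (rule L.R_9[OF ra(1)])
    finally show ?thesis by (simp add: mult.assoc)
  qed
qed

lemma cgens_form:
  assumes "g \<in> cgens n"
  obtains C a where "C \<in> {Psi, PsiS}" "a \<in> {1..n}" "g = C a"
    | W a where "W \<in> {Om, OmI}" "a \<in> {1..n}" "g = W a"
  using assms by (cases g) auto

lemma hGC: "C \<in> {Psi, PsiS} \<Longrightarrow> hG n (j, C x) = L.ff ((j-1)*n) * gen (C (x + (j-1)*n))"
  by (auto simp: fr_ff)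
lemma hGW: "W \<in> {Om, OmI} \<Longrightarrow> hG n (j, W x) = gen (W (x + (j-1)*n))"
  by auto

lemma hG_cross:
  assumes j: "j \<in> {1..m}" and j': "j' \<in> {1..m}" and jj: "j < j'" and g: "g \<in> cgens n" and g': "g' \<in> cgens n"
  shows "cm (cl_rels q (n*m) k) (hG n (j, g)) (hG n (j', g'))"
proof -
  let ?s = "(j-1)*n" and ?s' = "(j'-1)*n"
  have r1: "x + ?s \<in> {1..n*m}" "?s < x + ?s" "x + ?s \<le> ?s'" if "x \<in> {1..n}" for x
    using that ar_le[of j m x n] ar_blk[of j j' x n] j jj by auto
  have r2: "y + ?s' \<in> {1..n*m}" "?s' < y + ?s'" if "y \<in> {1..n}" for y
    using that ar_le[of j' m y n] j' by auto
  have sN: "?s \<le> n*m" "?s' \<le> n*m" using ar_s[of j m n] ar_s[of j' m n] j j' by auto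
  have ss: "?s \<le> ?s'" using jj by (intro mult_le_mono1) simp
  show ?thesis
  proof (cases rule: cgens_form[OF g])
    case (1 C a)
    note ra = r1[OF 1(2)]
    show ?thesis
    proof (cases rule: cgens_form[OF g'])
      case (1 D b)
      note rb = r2[OF 1(2)]
      show ?thesis unfolding \<open>g = C a\<close> \<open>g' = D b\<close> hGC[OF \<open>C \<in> _\<close>] hGC[OF \<open>D \<in> _\<close>]
        by (rule L.B_B) (use ra rb ss \<open>C \<in> _\<close> \<open>D \<in> _\<close> in auto)
    next
      case (2 W b)
      note rb = r2[OF 2(2)]
      show ?thesis unfolding \<open>g = C a\<close> \<open>g' = W b\<close> hGC[OF \<open>C \<in> _\<close>] hGW[OF \<open>W \<in> _\<close>]
        by (rule cm_sym, rule L.W_B) (use ra rb sN \<open>C \<in> _\<close> \<open>W \<in> _\<close> in auto)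
    qed
  next
    case (2 V a)
    note ra = r1[OF 2(2)]
    show ?thesis
    proof (cases rule: cgens_form[OF g'])
      case (1 D b)
      note rb = r2[OF 1(2)]
      show ?thesis unfolding \<open>g = V a\<close> \<open>g' = D b\<close> hGW[OF \<open>V \<in> _\<close>] hGC[OF \<open>D \<in> _\<close>]
        by (rule L.W_B) (use ra rb sN \<open>V \<in> _\<close> \<open>D \<in> _\<close> in auto)
    next
      case (2 W b)
      note rb = r2[OF 2(2)]
      show ?thesis unfolding \<open>g = V a\<close> \<open>g' = W b\<close> hGW[OF \<open>V \<in> _\<close>] hGW[OF \<open>W \<in> _\<close>]
        by (rule L.W_W) (use ra rb \<open>V \<in> _\<close> \<open>W \<in> _\<close> in auto)
    qed
  qed
qed

lemma hG_rels: "r \<in> t_rels q n m k \<Longrightarrow> free_hom (hG n) r \<in> Jd (cl_rels q (n*m) k)"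
proof -
  assume "r \<in> t_rels q n m k"
  then consider (a) j r0 where "j \<in> {1..m}" "r0 \<in> cl_rels q n k" "r = free_hom (\<lambda>g. gen (j,g)) r0"
    | (b) j j' g g' where "r = gen (j,g) * gen (j',g') - gen (j',g') * gen (j,g)"
        "j \<in> {1..m}" "j' \<in> {1..m}" "j \<noteq> j'" "g \<in> cgens n" "g' \<in> cgens n"
    unfolding t_rels_def by blast
  then show ?thesis
  proof cases
    case a
    have "free_hom (hG n) r = free_hom (\<lambda>g. hG n (j, g)) r0"
      unfolding a(3) free_hom_comp by simp
    then show ?thesis using hG_factor[OF a(1,2)] by simp
  next
    case b
    have "cm (cl_rels q (n*m) k) (hG n (j, g)) (hG n (j', g'))"
    proof (cases "j < j'")
      case True then show ?thesis using hG_cross b by auto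
    next
      case False then have "j' < j" using b by auto
      then show ?thesis using hG_cross[of j' j g' g] b by (auto intro: cm_sym)
    qed
    then show ?thesis unfolding b(1) by (simp add: free_hom_diff free_hom_mult cm_Jd)
  qed
qed

abbreviation "TR \<equiv> t_rels q n m k"
abbreviation "FF l \<equiv> in_factor l (fr n) :: (nat \<times> cgen, 'k) fa"

lemma FF_ff: "l \<in> {1..m} \<Longrightarrow> FF l = clif.ff (\<lambda>g. gen (l, g)) n"
  unfolding in_factor_def by (rule clif.free_hom_fr[OF Tl])

lemma cross_gen: "j \<in> {1..m} \<Longrightarrow> l \<in> {1..m} \<Longrightarrow> j \<noteq> l \<Longrightarrow> g \<in> cgens n \<Longrightarrow> g' \<in> cgens n \<Longrightarrow>
   cm TR (gen (j, g)) (gen (l, g'))"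
  unfolding cm_def mc_def by (rule Jd_rel) (unfold t_rels_def, rule UnI2, blast)

lemma in_factor_simps: "in_factor l (scal c) = scal c" "in_factor l (gen g) = gen (l, g)"
  "in_factor l (x + y) = in_factor l x + in_factor l y" "in_factor l (x * y) = in_factor l x * in_factor l y"
  by (simp_all add: in_factor_def free_hom_add free_hom_mult)

lemma cm_add_left: "cm Rs x z \<Longrightarrow> cm Rs y z \<Longrightarrow> cm Rs (x + y) z"
  by (meson cm_add cm_sym)
lemma cm_mult_left: "cm Rs x z \<Longrightarrow> cm Rs y z \<Longrightarrow> cm Rs (x * y) z"
  by (meson cm_mult cm_sym)

lemma cross_inf: assumes "j \<in> {1..m}" "l \<in> {1..m}" "j \<noteq> l" "g \<in> cgens n" "x \<in> FC (cgens n)"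
  shows "cm TR (gen (j, g)) (in_factor l x)"
  using assms(5)
proof (induction rule: FC_induct)
  case (scal c) then show ?case by (simp add: in_factor_simps)
next
  case (gen g') then show ?case using cross_gen assms by (simp add: in_factor_simps)
next
  case (add x y) then show ?case by (simp add: in_factor_simps cm_add)
next
  case (mult x y) then show ?case by (simp add: in_factor_simps cm_mult)
qed

lemma cross_inf2: assumes "j \<in> {1..m}" "l \<in> {1..m}" "j \<noteq> l" "x \<in> FC (cgens n)" "y \<in> FC (cgens n)"
  shows "cm TR (in_factor j x) (in_factor l y)"
  using assms(4)
proof (induction rule: FC_induct)
  case (scal c) then show ?case by (simp add: in_factor_simps cm_sym)
next
  case (gen g') then show ?case using cross_inf assms by (simp add: in_factor_simps)
next
  case (add x y) then show ?case by (simp add: in_factor_simps cm_add_left)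
next
  case (mult x y) then show ?case by (simp add: in_factor_simps cm_mult_left)
qed

lemma frn_FC: "fr n \<in> FC (cgens n)" by (rule fr_FC) simp

lemma TF_Suc: "1 \<le> j \<Longrightarrow> TF n (Suc j) = TF n j * FF j"
  by (simp add: TF_def)
lemma TF_le1: "j \<le> 1 \<Longrightarrow> TF n j = 1"
  by (simp add: TF_def)

lemma TF_cm_gen: assumes "l \<in> {1..m}" "g \<in> cgens n" "j \<le> l" shows "cm TR (gen (l, g)) (TF n j)"
  unfolding TF_def by (rule cm_prod_map, rule cross_inf) (use assms frn_FC in auto)

lemma TF_W: assumes l: "l \<in> {1..m}" and W: "W \<in> {Om, OmI}" and a: "a \<in> {1..n}" and j: "j \<le> m + 1"
  shows "cm TR (gen (l, W a)) (TF n j)"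
  unfolding TF_def
proof (rule cm_prod_map)
  fix i assume i: "i \<in> set [1..<j]"
  show "cm TR (gen (l, W a)) (FF i)"
  proof (cases "i = l")
    case True
    show ?thesis unfolding True FF_ff[OF l] using W clif.F3W[OF Tl[OF l], of n a] clif.F3V[OF Tl[OF l], of n a] a by auto
  next
    case False
    show ?thesis by (rule cross_inf) (use i j l W a False frn_FC in auto)
  qed
qed

lemma TF_acm: assumes l: "l \<in> {1..m}" and C: "C \<in> {Psi, PsiS}" and a: "a \<in> {1..n}"
  shows "l < j \<Longrightarrow> j \<le> m + 1 \<Longrightarrow> acm TR (gen (l, C a)) (TF n j)"
proof (induction j)
  case 0 then show ?case by simp
next
  case (Suc j)
  have j1: "1 \<le> j" using Suc.prems l by auto
  show ?case
  proof (cases "l = j")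
    case True
    have 1: "cm TR (gen (l, C a)) (TF n j)" by (rule TF_cm_gen) (use l C a True in auto)
    have 2: "acm TR (gen (l, C a)) (FF l)" unfolding FF_ff[OF l]
      by (rule clif.acm_F2[OF Tl[OF l]]) (use C a in auto)
    show ?thesis unfolding TF_Suc[OF j1] using cm_acm[OF 1 2] True by simp
  next
    case False
    then have IH: "acm TR (gen (l, C a)) (TF n j)" using Suc by auto
    have 2: "cm TR (gen (l, C a)) (FF j)" by (rule cross_inf) (use l C a False Suc.prems j1 frn_FC in auto)
    show ?thesis unfolding TF_Suc[OF j1] by (rule acm_cm[OF IH 2])
  qed
qed

lemma sq_prod: assumes "cm Rs B A" "mc Rs (A * A) 1" "mc Rs (B * B) 1" shows "mc Rs ((A * B) * (A * B)) 1"
proof -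
  have "(A * B) * (A * B) = A * (B * A) * B" by (simp add: mult.assoc)
  also have "mc Rs \<dots> (A * (A * B) * B)" by (rule mc_rmult, rule mc_lmult, rule cmD[OF assms(1)])
  also have "A * (A * B) * B = (A * A) * (B * B)" by (simp add: mult.assoc)
  also have "mc Rs \<dots> (1 * 1)" by (rule mc_mult[OF assms(2,3)])
  finally show ?thesis by simp
qed

lemma FF_cm: "i \<in> {1..m} \<Longrightarrow> l \<in> {1..m} \<Longrightarrow> cm TR (FF i) (FF l)"
  by (cases "i = l") (auto intro!: cross_inf2 frn_FC)

lemma TF_sq: "j \<le> m + 1 \<Longrightarrow> mc TR (TF n j * TF n j) 1"
proof (induction j)
  case 0 then show ?case by (simp add: TF_le1)
next
  case (Suc j)
  show ?case
  proof (cases "j = 0")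
    case True then show ?thesis by (simp add: TF_le1)
  next
    case False
    then have j1: "1 \<le> j" by simp
    have jm: "j \<in> {1..m}" using Suc.prems j1 by auto
    have c: "cm TR (FF j) (TF n j)" unfolding TF_def
      by (rule cm_prod_map, rule FF_cm) (use jm Suc.prems in auto)
    show ?thesis unfolding TF_Suc[OF j1]
      by (rule sq_prod[OF c]) (use Suc FF_ff[OF jm] clif.F4[OF Tl[OF jm], of n] in auto)
  qed
qed

lemma TF_TF: "j \<le> m + 1 \<Longrightarrow> j' \<le> m + 1 \<Longrightarrow> cm TR (TF n j) (TF n j')"
  unfolding TF_def[of n j']
  by (rule cm_prod_map, rule cm_sym, unfold TF_def, rule cm_prod_map, rule FF_cm) auto

lemma hH_same: assumes j: "j \<in> {1..m}" and g: "g \<in> cgens n" and g': "g' \<in> cgens n"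
  shows "mc TR ((TF n j * gen (j, g)) * (TF n j * gen (j, g'))) (gen (j, g) * gen (j, g'))"
  by (rule gen_same, rule TF_cm_gen, use j g in auto, rule TF_cm_gen, use j g' in auto, rule TF_sq, use j in auto)

lemma hH_acm: assumes j: "j \<in> {1..m}" and j': "j' \<in> {1..m}" and x: "x \<in> {1..n}" and y: "y \<in> {1..n}"
  and C: "C \<in> {Psi, PsiS}" and D: "D \<in> {Psi, PsiS}"
  and same: "j = j' \<Longrightarrow> acm TR (gen (j, C x)) (gen (j, D y))"
  shows "acm TR (TF n j * gen (j, C x)) (TF n j' * gen (j', D y))"
proof -
  have gC: "C x \<in> cgens n" using C x by auto
  have gD: "D y \<in> cgens n" using D y by auto
  have lt: "acm TR (TF n j * gen (j, C x)) (TF n j' * gen (j', D y))"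
    if "j < j'" "j \<in> {1..m}" "j' \<in> {1..m}" "C \<in> {Psi, PsiS}" "D \<in> {Psi, PsiS}" "x \<in> {1..n}" "y \<in> {1..n}"
    for j j' C D x y
  proof (rule gen_BB')
    show "acm TR (gen (j, C x)) (TF n j')" by (rule TF_acm) (use that in auto)
    show "cm TR (TF n j) (gen (j', D y))" by (rule cm_sym, rule TF_cm_gen) (use that in auto)
    show "cm TR (TF n j) (TF n j')" by (rule TF_TF) (use that in auto)
    show "cm TR (gen (j, C x)) (gen (j', D y))" by (rule cross_gen) (use that in auto)
  qed
  consider "j = j'" | "j < j'" | "j' < j" by arith
  then show ?thesis
  proof cases
    case 1
    show ?thesis unfolding 1[symmetric]
      by (rule acm_transfer[OF hH_same[OF j gC gD] hH_same[OF j gD gC] same[OF 1]])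
  next
    case 2 then show ?thesis using lt[OF 2 j j' C D x y] by simp
  next
    case 3 show ?thesis by (rule acm_sym[OF lt[OF 3 j' j D C y x]])
  qed
qed

lemma blk_facts: assumes "a \<in> {1..n*m}"
  shows "blk n a \<in> {1..m}" "pos n a \<in> {1..n}" "a = pos n a + (blk n a - 1) * n"
  using blk_pos_range[OF npos, of a m] assms by auto

lemma blk_eq: assumes "a \<in> {1..n*m}" "b \<in> {1..n*m}"
  shows "a = b \<longleftrightarrow> blk n a = blk n b \<and> pos n a = pos n b"
  using blk_facts(3)[OF assms(1)] blk_facts(3)[OF assms(2)] by metis

lemma hHC: "C \<in> {Psi, PsiS} \<Longrightarrow> hH n (C a) = TF n (blk n a) * gen (blk n a, C (pos n a))" by auto
lemma hHW: "W \<in> {Om, OmI} \<Longrightarrow> hH n (W a) = gen (blk n a, W (pos n a))" by auto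

lemma hH_rels: "r \<in> cl_rels q (n*m) k \<Longrightarrow> free_hom (hH n) r \<in> Jd TR"
proof (erule cl_rels_check)
  fix a b assume a: "a \<in> {1..n*m}" and b: "b \<in> {1..n*m}"
  note fa = blk_facts[OF a] and fb = blk_facts[OF b]
  note Ta = Tl[OF fa(1)]
  let ?j = "blk n a" and ?x = "pos n a" and ?j' = "blk n b" and ?y = "pos n b"
  show "cm TR (hH n (Om a)) (hH n (Om b))"
  proof (cases "?j = ?j'")
    case True show ?thesis using clif.R_WW[OF Ta fa(2) fb(2)] True by simp
  next
    case False show ?thesis using cross_gen[OF fa(1) fb(1) False] fa fb by simp
  qed
  show "scm TR (if a = b then q else 1) (hH n (Om a)) (hH n (Psi b))"
  proof -
    have 1: "scm TR 1 (gen (?j, Om ?x)) (TF n ?j')"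
      unfolding scm_one by (rule TF_W) (use fa fb in auto)
    have 2: "scm TR (if a = b then q else 1) (gen (?j, Om ?x)) (gen (?j', Psi ?y))"
    proof (cases "?j = ?j'")
      case True
      then have e: "(a = b) = (?x = ?y)" using blk_eq[OF a b] by simp
      show ?thesis unfolding e using clif.R_WP[OF Ta fa(2) fb(2)] True by simp
    next
      case False
      then have e: "a \<noteq> b" by auto
      show ?thesis using e cross_gen[OF fa(1) fb(1) False] fa fb by (simp add: scm_one)
    qed
    show ?thesis using scm_mult[OF 1 2] by simp
  qed
  show "scm TR (if a = b then inverse q else 1) (hH n (Om a)) (hH n (PsiS b))"
  proof -
    have 1: "scm TR 1 (gen (?j, Om ?x)) (TF n ?j')"
      unfolding scm_one by (rule TF_W) (use fa fb in auto)
    have 2: "scm TR (if a = b then inverse q else 1) (gen (?j, Om ?x)) (gen (?j', PsiS ?y))"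
    proof (cases "?j = ?j'")
      case True
      then have e: "(a = b) = (?x = ?y)" using blk_eq[OF a b] by simp
      show ?thesis unfolding e using clif.R_WS[OF Ta fa(2) fb(2)] True by simp
    next
      case False
      then have e: "a \<noteq> b" by auto
      show ?thesis using e cross_gen[OF fa(1) fb(1) False] fa fb by (simp add: scm_one)
    qed
    show ?thesis using scm_mult[OF 1 2] by simp
  qed
  show "acm TR (hH n (Psi a)) (hH n (Psi b))"
    unfolding hH.simps by (rule hH_acm) (use fa fb clif.R_PP[OF Ta fa(2) fb(2)] in auto)
  show "acm TR (hH n (PsiS a)) (hH n (PsiS b))"
    unfolding hH.simps by (rule hH_acm) (use fa fb clif.R_SS[OF Ta fa(2) fb(2)] in auto)
  show "acm TR (hH n (Psi a)) (hH n (PsiS b))" if ab: "a \<noteq> b"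
  proof -
    have "?j = ?j' \<Longrightarrow> ?x \<noteq> ?y" using blk_eq[OF a b] ab by simp
    then show ?thesis
      unfolding hH.simps by (intro hH_acm) (use fa fb clif.R_PS[OF Ta fa(2) fb(2)] in auto)
  qed
next
  fix a assume a: "a \<in> {1..n*m}"
  note fa = blk_facts[OF a]
  note Ta = Tl[OF fa(1)]
  let ?j = "blk n a" and ?x = "pos n a"
  show "mc TR (hH n (Om a) * hH n (OmI a)) 1" using clif.R_WV[OF Ta fa(2) fa(2)] by simp
  show "mc TR (hH n (OmI a) * hH n (Om a)) 1" using clif.R_VW[OF Ta fa(2) fa(2)] by simp
  have PS: "mc TR (hH n (Psi a) * hH n (PsiS a)) (gen (?j, Psi ?x) * gen (?j, PsiS ?x))"
    unfolding hH.simps by (rule hH_same) (use fa in auto)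
  have SP: "mc TR (hH n (PsiS a) * hH n (Psi a)) (gen (?j, PsiS ?x) * gen (?j, Psi ?x))"
    unfolding hH.simps by (rule hH_same) (use fa in auto)
  show "mc TR (hH n (Psi a) * hH n (PsiS a) + scal (q ^ k) * hH n (PsiS a) * hH n (Psi a)) (hH n (OmI a) ^ k)"
  proof -
    have "mc TR (hH n (Psi a) * hH n (PsiS a) + scal (q ^ k) * (hH n (PsiS a) * hH n (Psi a)))
       (gen (?j, Psi ?x) * gen (?j, PsiS ?x) + scal (q ^ k) * (gen (?j, PsiS ?x) * gen (?j, Psi ?x)))"
      by (rule mc_add[OF PS mc_lmult[OF SP]])
    also have "mc TR \<dots> (gen (?j, OmI ?x) ^ k)" by (rule clif.R_8[OF Ta fa(2)])
    finally show ?thesis by (simp add: mult.assoc)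
  qed
  show "mc TR (hH n (Psi a) * hH n (PsiS a) + scal (inverse q ^ k) * hH n (PsiS a) * hH n (Psi a)) (hH n (Om a) ^ k)"
  proof -
    have "mc TR (hH n (Psi a) * hH n (PsiS a) + scal (inverse q ^ k) * (hH n (PsiS a) * hH n (Psi a)))
       (gen (?j, Psi ?x) * gen (?j, PsiS ?x) + scal (inverse q ^ k) * (gen (?j, PsiS ?x) * gen (?j, Psi ?x)))"
      by (rule mc_add[OF PS mc_lmult[OF SP]])
    also have "mc TR \<dots> (gen (?j, Om ?x) ^ k)" by (rule clif.R_9[OF Ta fa(2)])
    finally show ?thesis by (simp add: mult.assoc)
  qed
qed

lemma map_shift_upt: "map (\<lambda>a. f (a + s)) [i..<j] = map f [i+s..<j+s]"
  by (induction j) auto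

lemma block_prod:
  fixes f :: "nat \<Rightarrow> 'a::monoid_mult"
  shows "prod_list (map f [1..<(j-1)*n+1]) =
    prod_list (map (\<lambda>l. prod_list (map (\<lambda>a. f (a + (l-1)*n)) [1..<n+1])) [1..<j])"
proof (induction j)
  case 0 then show ?case by simp
next
  case (Suc j)
  show ?case
  proof (cases "j = 0")
    case True then show ?thesis by simp
  next
    case False
    have e: "(Suc j - 1) * n + 1 = ((j-1)*n + 1) + n" using False by (cases j) auto
    have "[1..<(Suc j - 1) * n + 1] = [1..<(j-1)*n+1] @ [(j-1)*n+1..<((j-1)*n + 1) + n]"
      unfolding e by (rule upt_add_eq_append) simp
    moreover have "map f [(j-1)*n+1..<((j-1)*n + 1) + n] = map (\<lambda>a. f (a + (j-1)*n)) [1..<n+1]"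
      using map_shift_upt[of f "(j-1)*n" 1 "n+1"] by (simp add: add.commute add.left_commute)
    moreover have "[1..<Suc j] = [1..<j] @ [j]" using False by simp
    ultimately show ?thesis using Suc.IH by simp
  qed
qed

lemma hH_fr: assumes j: "j \<in> {1..m}" shows "mc TR (free_hom (hH n) (fr ((j-1)*n))) (TF n j)"
proof -
  define c :: "nat \<Rightarrow> (nat \<times> cgen, 'k) fa" where "c = (\<lambda>i. hH n (Psi i) * hH n (PsiS i) - hH n (PsiS i) * hH n (Psi i))"
  have e1: "free_hom (hH n) (fr ((j-1)*n)) = prod_list (map c [1..<(j-1)*n+1])"
    unfolding fr_def c_def by (simp only: free_hom_prod_list free_hom_diff free_hom_mult free_hom_gen map_map comp_def)
  have e2: "prod_list (map c [1..<(j-1)*n+1]) = prod_list (map (\<lambda>l. prod_list (map (\<lambda>a. c (a + (l-1)*n)) [1..<n+1])) [1..<j])"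
    by (rule block_prod[where j=j])
  have m3: "mc TR (prod_list (map (\<lambda>l. prod_list (map (\<lambda>a. c (a + (l-1)*n)) [1..<n+1])) [1..<j])) (prod_list (map (\<lambda>l. FF l) [1..<j]))"
  proof (rule mc_prod_map)
    fix l assume l: "l \<in> set [1..<j]"
    then have lm: "l \<in> {1..m}" using j by auto
    have f: "FF l = prod_list (map (\<lambda>a. gen (l, Psi a) * gen (l, PsiS a) - gen (l, PsiS a) * gen (l, Psi a)) [1..<n+1])"
      unfolding FF_ff[OF lm] clif.ff_def[OF Tl[OF lm]] ..
    have "mc TR (prod_list (map (\<lambda>a. c (a + (l-1)*n)) [1..<n+1]))
        (prod_list (map (\<lambda>a. gen (l, Psi a) * gen (l, PsiS a) - gen (l, PsiS a) * gen (l, Psi a)) [1..<n+1]))"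
    proof (rule mc_prod_map)
      fix a assume a: "a \<in> set [1..<n+1]"
      have bp: "blk n (a + (l-1)*n) = l" "pos n (a + (l-1)*n) = a"
        using blk_pos_shift[OF npos, of a l] a lm by auto
      show "mc TR (c (a + (l-1)*n)) (gen (l, Psi a) * gen (l, PsiS a) - gen (l, PsiS a) * gen (l, Psi a))"
        unfolding c_def hH.simps bp by (rule mc_diff; rule hH_same) (use lm a in auto)
    qed
    then show "mc TR (prod_list (map (\<lambda>a. c (a + (l-1)*n)) [1..<n+1])) (FF l)" unfolding f .
  qed
  have e4: "prod_list (map (\<lambda>l. FF l) [1..<j]) = TF n j" by (simp add: TF_def)
  show ?thesis using m3 unfolding e1 e2 e4 .
qed

lemma id1: assumes g: "g \<in> tgens n m" shows "free_hom (hH n) (hG n g) - gen g \<in> Jd TR"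
proof -
  obtain j c where gj: "g = (j, c)" and j: "j \<in> {1..m}" and c: "c \<in> cgens n" using g by (cases g) auto
  show ?thesis unfolding gj
  proof (cases rule: cgens_form[OF c])
    case (1 C a)
    have bp: "blk n (a + (j-1)*n) = j" "pos n (a + (j-1)*n) = a"
      using blk_pos_shift[OF npos, of a j] 1 j by auto
    have hc: "hH n (C (a + (j-1)*n)) = TF n j * gen (j, C a)" using 1(1) bp by auto
    have hg: "hG n (j, C a) = fr ((j-1)*n) * gen (C (a + (j-1)*n))" using 1(1) by auto
    have e: "free_hom (hH n) (hG n (j, C a)) = free_hom (hH n) (fr ((j-1)*n)) * (TF n j * gen (j, C a))"
      unfolding hg free_hom_mult free_hom_gen hc ..
    have m1: "mc TR (free_hom (hH n) (fr ((j-1)*n)) * (TF n j * gen (j, C a))) (TF n j * (TF n j * gen (j, C a)))"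
      by (rule mc_rmult, rule hH_fr[OF j])
    have m2: "mc TR ((TF n j * TF n j) * gen (j, C a)) (1 * gen (j, C a))"
      by (rule mc_rmult, rule TF_sq) (use j in auto)
    have "mc TR (free_hom (hH n) (hG n (j, C a))) (gen (j, C a))"
      using mc_trans[OF m1 m2[unfolded mult.assoc]] unfolding e mult_1_left .
    then show "free_hom (hH n) (hG n (j, c)) - gen (j, c) \<in> Jd TR" unfolding mc_def 1(3) .
  next
    case (2 W a)
    have bp: "blk n (a + (j-1)*n) = j" "pos n (a + (j-1)*n) = a"
      using blk_pos_shift[OF npos, of a j] 2 j by auto
    show "free_hom (hH n) (hG n (j, c)) - gen (j, c) \<in> Jd TR"
      unfolding 2(3) using 2(1) bp by auto
  qed
qed

lemma hG_FF: assumes l: "l \<in> {1..m}" shows "mc (cl_rels q (n*m) k) (free_hom (hG n) (FF l))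
   (prod_list (map (\<lambda>a. L.cc (a + (l-1)*n)) [1..<n+1]))"
proof -
  have e1: "free_hom (hG n) (FF l) = free_hom (\<lambda>g. hG n (l, g)) (fr n)"
    unfolding in_factor_def free_hom_comp free_hom_gen ..
  have e2: "free_hom (\<lambda>g. hG n (l, g)) (fr n) = prod_list (map (\<lambda>a. hG n (l, Psi a) * hG n (l, PsiS a) - hG n (l, PsiS a) * hG n (l, Psi a)) [1..<n+1])"
    unfolding fr_def by (simp only: free_hom_prod_list free_hom_diff free_hom_mult free_hom_gen map_map comp_def)
  have m3: "mc (cl_rels q (n*m) k) (prod_list (map (\<lambda>a. hG n (l, Psi a) * hG n (l, PsiS a) - hG n (l, PsiS a) * hG n (l, Psi a)) [1..<n+1]))
     (prod_list (map (\<lambda>a. L.cc (a + (l-1)*n)) [1..<n+1]))"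
  proof (rule mc_prod_map)
    fix a assume a: "a \<in> set [1..<n+1]"
    have rng: "a + (l-1)*n \<le> n*m" "(l-1)*n < a + (l-1)*n" using ar_le[of l m a n] l a by auto
    show "mc (cl_rels q (n*m) k) (hG n (l, Psi a) * hG n (l, PsiS a) - hG n (l, PsiS a) * hG n (l, Psi a))
        (L.cc (a + (l-1)*n))"
      unfolding hG.simps fr_ff
      by (rule mc_diff; rule L.same_block) (use rng in auto)
  qed
  show ?thesis using m3 unfolding e1 e2 .
qed

lemma hG_TF: assumes j: "j \<in> {1..m}" shows "mc (cl_rels q (n*m) k) (free_hom (hG n) (TF n j)) (fr ((j-1)*n))"
proof -
  have e1: "free_hom (hG n) (TF n j) = prod_list (map (\<lambda>l. free_hom (hG n) (FF l)) [1..<j])"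
    unfolding TF_def by (simp only: free_hom_prod_list map_map comp_def)
  have m2: "mc (cl_rels q (n*m) k) (prod_list (map (\<lambda>l. free_hom (hG n) (FF l)) [1..<j]))
     (prod_list (map (\<lambda>l. prod_list (map (\<lambda>a. L.cc (a + (l-1)*n)) [1..<n+1])) [1..<j]))"
    by (rule mc_prod_map, rule hG_FF) (use j in auto)
  have e3: "prod_list (map L.cc [1..<(j-1)*n+1]) = prod_list (map (\<lambda>l. prod_list (map (\<lambda>a. L.cc (a + (l-1)*n)) [1..<n+1])) [1..<j])"
    by (rule block_prod[where j=j])
  have e4: "prod_list (map L.cc [1..<(j-1)*n+1]) = fr ((j-1)*n)" unfolding fr_ff L.ff_def ..
  show ?thesis using m2 unfolding e1 e3[symmetric] e4 .
qed

lemma id2: assumes g: "g \<in> cgens (n*m)" shows "free_hom (hG n) (hH n g) - gen g \<in> Jd (cl_rels q (n*m) k)"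
proof -
  obtain i where i: "i \<in> {1..n*m}" and gi: "g = Psi i \<or> g = PsiS i \<or> g = Om i \<or> g = OmI i"
    using g by (cases g) auto
  note fi = blk_facts[OF i]
  define j where "j = blk n i"
  define x where "x = pos n i"
  have ix: "x + (j-1)*n = i" using fi(3) unfolding j_def x_def by simp
  have jm: "j \<in> {1..m}" using fi(1) unfolding j_def .
  have sN: "(j - 1) * n \<le> n*m" using ar_s[of j m n] jm by auto
  have C: "mc (cl_rels q (n*m) k) (free_hom (hG n) (hH n (C i))) (gen (C i))" if C: "C \<in> {Psi, PsiS}" for C
  proof -
    have hc: "hH n (C i) = TF n j * gen (j, C x)" using C unfolding j_def x_def by auto
    have hg: "hG n (j, C x) = fr ((j-1)*n) * gen (C i)" using C ix by auto
    have e: "free_hom (hG n) (hH n (C i)) = free_hom (hG n) (TF n j) * (fr ((j-1)*n) * gen (C i))"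
      unfolding hc free_hom_mult free_hom_gen hg ..
    have m1: "mc (cl_rels q (n*m) k) (free_hom (hG n) (TF n j) * (fr ((j-1)*n) * gen (C i)))
        (fr ((j-1)*n) * (fr ((j-1)*n) * gen (C i)))"
      by (rule mc_rmult, rule hG_TF[OF jm])
    have m2: "mc (cl_rels q (n*m) k) ((L.ff ((j-1)*n) * L.ff ((j-1)*n)) * gen (C i)) (1 * gen (C i))"
      by (rule mc_rmult, rule L.F4[OF sN])
    show ?thesis using mc_trans[OF m1 m2[unfolded mult.assoc fr_ff[symmetric]]] unfolding e mult_1_left .
  qed
  have "mc (cl_rels q (n*m) k) (free_hom (hG n) (hH n g)) (gen g)"
  proof -
    consider "g = Psi i" | "g = PsiS i" | "g = Om i" | "g = OmI i" using gi by blast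
    then show ?thesis
    proof cases
      case 1 then show ?thesis using C[of Psi] by simp
    next
      case 2 then show ?thesis using C[of PsiS] by simp
    next
      case 3 then show ?thesis using ix unfolding j_def x_def by simp
    next
      case 4 then show ?thesis using ix unfolding j_def x_def by simp
    qed
  qed
  then show ?thesis by (simp add: mc_def)
qed

end

section \<open>Gradings\<close>

lemma wdeg_plus: "wdeg dg (u + v) = (\<lambda>i. wdeg dg u i + wdeg dg v i)"
  by (simp add: wdeg_def)

lemma wdeg_Wd_Cons: "wdeg dg (Wd (x # xs)) = (\<lambda>i. dg x i + wdeg dg (Wd xs) i)"
  by (simp add: wdeg_def)

lemma wdeg_nil: "wdeg dg (Wd []) = (\<lambda>i. 0)"
  by (simp add: wdeg_def)

lemma homog_zero[simp]: "homog dg d 0" by (simp add: homog_def)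

lemma homog_add: "homog dg d x \<Longrightarrow> homog dg d y \<Longrightarrow> homog dg d (x + y)"
  unfolding homog_def using keys_add[of x y] by blast

lemma homog_uminus: "homog dg d x \<Longrightarrow> homog dg d (- x)"
  unfolding homog_def by simp

lemma homog_diff: "homog dg d x \<Longrightarrow> homog dg d y \<Longrightarrow> homog dg d (x - y)"
  unfolding homog_def using keys_diff[of x y] by blast

lemma homog_mult: "homog dg d1 x \<Longrightarrow> homog dg d2 y \<Longrightarrow> d = (\<lambda>i. d1 i + d2 i) \<Longrightarrow> homog dg d (x * y)"
  unfolding homog_def using keys_mult[of x y] by (fastforce simp: wdeg_plus)

lemma homog_scal: "homog dg (\<lambda>i. 0) (scal c)"
  unfolding homog_def scal_def by (simp add: wdeg_nil)

lemma homog_one: "homog dg (\<lambda>i. 0) 1"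
  using homog_scal[of dg 1] by simp

lemma homog_gen: "homog dg (dg g) (gen g)"
  unfolding homog_def gen_def by (simp add: wdeg_def)

lemma homog_gen': "d = dg g \<Longrightarrow> homog dg d (gen g)"
  using homog_gen by simp

lemma homog_sum: "(\<And>x. x \<in> A \<Longrightarrow> homog dg d (f x)) \<Longrightarrow> homog dg d (sum f A)"
  by (induction A rule: infinite_finite_induct) (auto intro: homog_add)

lemma homog_free_hom:
  assumes hg: "\<And>g. g \<in> G \<Longrightarrow> homog dg2 (dg1 g) (h g)" and p: "p \<in> FC G" and hp: "homog dg1 d p"
  shows "homog dg2 d (free_hom h p)"
proof -
  have pl: "set xs \<subseteq> G \<Longrightarrow> homog dg2 (wdeg dg1 (Wd xs)) (prod_list (map h xs))" for xs
  proof (induction xs)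
    case Nil then show ?case by (simp add: wdeg_nil homog_one)
  next
    case (Cons x xs)
    then show ?case by (simp only: list.map prod_list.Cons) (rule homog_mult[OF hg], auto simp: wdeg_Wd_Cons)
  qed
  show ?thesis unfolding free_hom_def
  proof (rule homog_sum)
    fix w assume w: "w \<in> Poly_Mapping.keys p"
    have G: "set (letters w) \<subseteq> G" using p w by (simp add: FC_iff)
    have d: "wdeg dg1 w = d" using hp w by (simp add: homog_def)
    show "homog dg2 d (scal (Poly_Mapping.lookup p w) * Hw h w)"
      by (rule homog_mult[OF homog_scal pl[OF G]]) (simp add: d[symmetric])
  qed
qed

lemma homog_fr: "homog cdeg (\<lambda>i. 0) (fr r :: (cgen,'k::field) fa)"
proof -
  have pl: "homog cdeg (\<lambda>i. 0) (prod_list xs)" if "\<And>x. x \<in> set xs \<Longrightarrow> homog cdeg (\<lambda>i. 0) x" for xs :: "(cgen,'k::field) fa list"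
    using that by (induction xs) (auto intro!: homog_mult[of cdeg "\<lambda>i. 0" _ "\<lambda>i. 0"] homog_one)
  have cmf: "homog cdeg (\<lambda>i. 0) (gen (Psi x) * gen (PsiS x) - gen (PsiS x) * gen (Psi x) :: (cgen,'k) fa)" for x
    by (intro homog_diff; rule homog_mult[OF homog_gen homog_gen]) auto
  show ?thesis unfolding fr_def by (rule pl) (use cmf in auto)
qed

lemma homog_hG: assumes "g \<in> tgens n m" shows "homog cdeg (tdeg n g) (hG n g :: (cgen,'k::field) fa)"
proof -
  obtain j c where g: "g = (j, c)" by (cases g)
  show ?thesis unfolding g
    by (cases c) (auto simp: tdeg_def intro!: homog_mult[OF homog_fr homog_gen] homog_gen')
qed

theorem theorem3p10:
  fixes q :: "'k::field" and n m k :: nat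
  assumes "(2::'k) \<noteq> 0" and "q \<noteq> 0" and "0 < n" and "0 < m" and "0 < k"
  shows "\<exists>\<Gamma> \<Gamma>'.
     \<Gamma> \<in> ring_iso (Tens q n m k) (Cl q (n*m) k)
   \<and> \<Gamma>' \<in> ring_iso (Cl q (n*m) k) (Tens q n m k)
   \<and> (\<forall>x\<in>carrier (Tens q n m k). \<Gamma>' (\<Gamma> x) = x)
   \<and> (\<forall>y\<in>carrier (Cl q (n*m) k). \<Gamma> (\<Gamma>' y) = y)
   \<and> (\<forall>c. \<Gamma> (tcls q n m k (scal c)) = clcls q (n*m) k (scal c))
   \<and> graded_map (tgens n m) (t_rels q n m k) (tdeg n) (cgens (n*m)) (cl_rels q (n*m) k) cdeg \<Gamma>
   \<and> (\<forall>j\<in>{1..m}. \<forall>a\<in>{1..n}.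
        \<Gamma> (tcls q n m k (gen (j, Psi a))) = clcls q (n*m) k (fr ((j-1)*n) * gen (Psi (a+(j-1)*n)))
      \<and> \<Gamma> (tcls q n m k (gen (j, PsiS a))) = clcls q (n*m) k (fr ((j-1)*n) * gen (PsiS (a+(j-1)*n)))
      \<and> \<Gamma> (tcls q n m k (gen (j, Om a))) = clcls q (n*m) k (gen (Om (a+(j-1)*n))))
   \<and> (\<forall>j\<in>{1..m}. \<forall>a\<in>{1..n}.
        \<Gamma>' (clcls q (n*m) k (gen (Psi (a+(j-1)*n)))) =
          tcls q n m k (prod_list (map (\<lambda>l. in_factor l (fr n)) [1..<j]) * gen (j, Psi a))
      \<and> \<Gamma>' (clcls q (n*m) k (gen (PsiS (a+(j-1)*n)))) =
          tcls q n m k (prod_list (map (\<lambda>l. in_factor l (fr n)) [1..<j]) * gen (j, PsiS a))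
      \<and> \<Gamma>' (clcls q (n*m) k (gen (Om (a+(j-1)*n)))) = tcls q n m k (gen (j, Om a)))
   \<and> (\<forall>j\<in>{1..m}. \<forall>a\<in>{1..n}. \<forall>b\<in>{1..n}. \<forall>P\<in>{Psi, PsiS}. \<forall>Q\<in>{Psi, PsiS}.
        \<Gamma> (tcls q n m k (gen (j, P a) * gen (j, Q b))) =
          clcls q (n*m) k (gen (P (a+(j-1)*n)) * gen (Q (b+(j-1)*n))))"
proof -
  interpret S: thm_setup q n m k by unfold_locales (use assms in auto)
  let ?G1 = "tgens n m" and ?R1 = "t_rels q n m k" and ?G2 = "cgens (n*m)" and ?R2 = "cl_rels q (n*m) k"
  define \<Gamma> where "\<Gamma> = qmap ?G1 ?R1 ?G2 ?R2 (hG n)"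
  define \<Gamma>' where "\<Gamma>' = qmap ?G2 ?R2 ?G1 ?R1 (hH n)"
  have q1: "qhom ?G1 ?R1 ?G2 ?R2 (hG n)"
    by unfold_locales (auto intro: t_rels_FC[THEN subsetD] cl_rels_FC[THEN subsetD] hG_FC S.hG_rels)
  have q2: "qhom ?G2 ?R2 ?G1 ?R1 (hH n)"
    by unfold_locales (use assms in \<open>auto intro: t_rels_FC[THEN subsetD] cl_rels_FC[THEN subsetD] hH_FC S.hH_rels\<close>)
  note iso = qmap_iso[OF q1 q2 S.id1 S.id2]
  note c1 = qhom.qmap_cls[OF q1] and c2 = qhom.qmap_cls[OF q2]
  have T: "Tens q n m k = Presented ?G1 ?R1" by (simp add: Tens_def)
  have C: "Cl q (n*m) k = Presented ?G2 ?R2" by (simp add: Cl_def)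
  have tc: "tcls q n m k = cls ?G1 ?R1" by (simp add: tcls_def fun_eq_iff)
  have cc: "clcls q (n*m) k = cls ?G2 ?R2" by (simp add: clcls_def fun_eq_iff)
  have rng: "a + (j-1)*n \<in> {1..n*m}" if "j \<in> {1..m}" "a \<in> {1..n}" for j a
    using that ar_le[of j m a n] by auto
  show ?thesis
  proof (intro exI[of _ \<Gamma>] exI[of _ \<Gamma>'] conjI)
    show "\<Gamma> \<in> ring_iso (Tens q n m k) (Cl q (n * m) k)" unfolding T C \<Gamma>_def by (rule iso(1))
    show "\<Gamma>' \<in> ring_iso (Cl q (n * m) k) (Tens q n m k)" unfolding T C \<Gamma>'_def by (rule iso(2))
    show "\<forall>x\<in>carrier (Tens q n m k). \<Gamma>' (\<Gamma> x) = x" unfolding T \<Gamma>_def \<Gamma>'_def by (rule iso(3))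
    show "\<forall>y\<in>carrier (Cl q (n * m) k). \<Gamma> (\<Gamma>' y) = y" unfolding C \<Gamma>_def \<Gamma>'_def by (rule iso(4))
    show "\<forall>c. \<Gamma> (tcls q n m k (scal c)) = clcls q (n * m) k (scal c)"
      unfolding tc cc \<Gamma>_def using c1[OF FC_scal] by simp
    show "graded_map ?G1 ?R1 (tdeg n) ?G2 ?R2 cdeg \<Gamma>"
      unfolding graded_map_def
    proof (intro allI impI)
      fix d and p :: "(nat \<times> cgen, 'k) fa" assume p: "p \<in> FC ?G1 \<and> homog (tdeg n) d p"
      show "\<exists>p'. p' \<in> FC ?G2 \<and> homog cdeg d p' \<and> \<Gamma> (cls ?G1 ?R1 p) = cls ?G2 ?R2 p'"
      proof (intro exI conjI)
        show "free_hom (hG n) p \<in> FC ?G2" using p by (intro FC_free_hom[OF hG_FC]) auto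
        show "homog cdeg d (free_hom (hG n) p)" using p by (intro homog_free_hom[OF homog_hG]) auto
        show "\<Gamma> (cls ?G1 ?R1 p) = cls ?G2 ?R2 (free_hom (hG n) p)" unfolding \<Gamma>_def using p c1 by auto
      qed
    qed
    show "\<forall>j\<in>{1..m}. \<forall>a\<in>{1..n}.
        \<Gamma> (tcls q n m k (gen (j, Psi a))) = clcls q (n*m) k (fr ((j-1)*n) * gen (Psi (a+(j-1)*n)))
      \<and> \<Gamma> (tcls q n m k (gen (j, PsiS a))) = clcls q (n*m) k (fr ((j-1)*n) * gen (PsiS (a+(j-1)*n)))
      \<and> \<Gamma> (tcls q n m k (gen (j, Om a))) = clcls q (n*m) k (gen (Om (a+(j-1)*n)))"
    proof (intro ballI conjI)
      fix j a assume j: "j \<in> {1..m}" and a: "a \<in> {1..n}"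
      have g: "(j, Psi a) \<in> ?G1" "(j, PsiS a) \<in> ?G1" "(j, Om a) \<in> ?G1" using j a by auto
      show "\<Gamma> (tcls q n m k (gen (j, Psi a))) = clcls q (n*m) k (fr ((j-1)*n) * gen (Psi (a+(j-1)*n)))"
        unfolding tc cc \<Gamma>_def c1[OF FC_gen[OF g(1)]] by simp
      show "\<Gamma> (tcls q n m k (gen (j, PsiS a))) = clcls q (n*m) k (fr ((j-1)*n) * gen (PsiS (a+(j-1)*n)))"
        unfolding tc cc \<Gamma>_def c1[OF FC_gen[OF g(2)]] by simp
      show "\<Gamma> (tcls q n m k (gen (j, Om a))) = clcls q (n*m) k (gen (Om (a+(j-1)*n)))"
        unfolding tc cc \<Gamma>_def c1[OF FC_gen[OF g(3)]] by simp
    qed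
    show "\<forall>j\<in>{1..m}. \<forall>a\<in>{1..n}.
        \<Gamma>' (clcls q (n*m) k (gen (Psi (a+(j-1)*n)))) =
          tcls q n m k (prod_list (map (\<lambda>l. in_factor l (fr n)) [1..<j]) * gen (j, Psi a))
      \<and> \<Gamma>' (clcls q (n*m) k (gen (PsiS (a+(j-1)*n)))) =
          tcls q n m k (prod_list (map (\<lambda>l. in_factor l (fr n)) [1..<j]) * gen (j, PsiS a))
      \<and> \<Gamma>' (clcls q (n*m) k (gen (Om (a+(j-1)*n)))) = tcls q n m k (gen (j, Om a))"
    proof (intro ballI conjI)
      fix j a assume j: "j \<in> {1..m}" and a: "a \<in> {1..n}"
      have bp: "blk n (a + (j-1)*n) = j" "pos n (a + (j-1)*n) = a"
        using blk_pos_shift[OF S.npos, of a j] a j by auto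
      note r = rng[OF j a]
      show "\<Gamma>' (clcls q (n*m) k (gen (Psi (a+(j-1)*n)))) =
          tcls q n m k (prod_list (map (\<lambda>l. in_factor l (fr n)) [1..<j]) * gen (j, Psi a))"
        unfolding tc cc \<Gamma>'_def using c2[OF FC_gen, of "Psi (a+(j-1)*n)"] r bp by (simp add: TF_def)
      show "\<Gamma>' (clcls q (n*m) k (gen (PsiS (a+(j-1)*n)))) =
          tcls q n m k (prod_list (map (\<lambda>l. in_factor l (fr n)) [1..<j]) * gen (j, PsiS a))"
        unfolding tc cc \<Gamma>'_def using c2[OF FC_gen, of "PsiS (a+(j-1)*n)"] r bp by (simp add: TF_def)
      show "\<Gamma>' (clcls q (n*m) k (gen (Om (a+(j-1)*n)))) = tcls q n m k (gen (j, Om a))"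
        unfolding tc cc \<Gamma>'_def using c2[OF FC_gen, of "Om (a+(j-1)*n)"] r bp by simp
    qed
    show "\<forall>j\<in>{1..m}. \<forall>a\<in>{1..n}. \<forall>b\<in>{1..n}. \<forall>P\<in>{Psi, PsiS}. \<forall>Q\<in>{Psi, PsiS}.
        \<Gamma> (tcls q n m k (gen (j, P a) * gen (j, Q b))) =
          clcls q (n*m) k (gen (P (a+(j-1)*n)) * gen (Q (b+(j-1)*n)))"
    proof (intro ballI)
      fix j a b P Q assume j: "j \<in> {1..m}" and a: "a \<in> {1..n}" and b: "b \<in> {1..n}"
        and P: "P \<in> {Psi, PsiS}" and Q: "Q \<in> {Psi, PsiS}"
      have gP: "P a \<in> cgens n" "Q b \<in> cgens n" "P (a+(j-1)*n) \<in> cgens (n*m)" "Q (b+(j-1)*n) \<in> cgens (n*m)"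
        using P Q a b rng[OF j a] rng[OF j b] by auto
      have in1: "gen (j, P a) * gen (j, Q b) \<in> FC ?G1" using gP j by (intro FC_mult FC_gen) auto
      have in2: "gen (P (a+(j-1)*n)) * gen (Q (b+(j-1)*n)) \<in> FC ?G2" using gP by (intro FC_mult FC_gen) auto
      have e: "free_hom (hG n) (gen (j, P a) * gen (j, Q b)) =
          (S.L.ff ((j-1)*n) * gen (P (a+(j-1)*n))) * (S.L.ff ((j-1)*n) * gen (Q (b+(j-1)*n)))"
        unfolding free_hom_mult free_hom_gen S.hGC[OF P] S.hGC[OF Q] ..
      have m: "mc ?R2 ((S.L.ff ((j-1)*n) * gen (P (a+(j-1)*n))) * (S.L.ff ((j-1)*n) * gen (Q (b+(j-1)*n))))
          (gen (P (a+(j-1)*n)) * gen (Q (b+(j-1)*n)))"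
        by (rule S.L.same_block) (use P Q a b rng[OF j a] rng[OF j b] in auto)
      have fin: "free_hom (hG n) (gen (j, P a) * gen (j, Q b)) \<in> FC ?G2"
        using in1 by (intro FC_free_hom[OF hG_FC]) auto
      show "\<Gamma> (tcls q n m k (gen (j, P a) * gen (j, Q b))) =
          clcls q (n*m) k (gen (P (a+(j-1)*n)) * gen (Q (b+(j-1)*n)))"
      proof -
        have "free_hom (hG n) (gen (j, P a) * gen (j, Q b)) - gen (P (a+(j-1)*n)) * gen (Q (b+(j-1)*n)) \<in> Jd ?R2"
          using m unfolding e mc_def .
        then have "cls ?G2 ?R2 (free_hom (hG n) (gen (j, P a) * gen (j, Q b))) = cls ?G2 ?R2 (gen (P (a+(j-1)*n)) * gen (Q (b+(j-1)*n)))"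
          using cls_eq_iff[OF cl_rels_FC[of q "n*m" k] fin in2] by simp
        then show ?thesis unfolding tc cc \<Gamma>_def c1[OF in1] .
      qed
    qed
  qed
qed

end
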